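(* Let $P$ be a Poisson bracket on $\mathbb{R}^n$. Every star-product on $(\mathbb{R}^n,P)$ is equivalent to a star-product on $(\mathbb{R}^n,P)$ whose associated sun-product coincides with the usual product on $\mathsf{Pol}$, i.e. whose sun-product cochains satisfy $\rho_r=0$ for all $r\ge1$.
   Context: $\mathsf{N}=C^\infty(\mathbb{R}^n)$, coordinates $x_1,\dots,x_n$, $\mathsf{Pol}=\mathbb{R}[x_1,\dots,x_n]$. A (differential) star-product on $(\mathbb{R}^n,P)$ is a bilinear map $f\ast_\nu g=\sum_{r\ge0}\nu^rC_r(f,g)$ from $\mathsf{N}\times\mathsf{N}$ to $\mathsf{N}[[\nu]]$, extended $\mathbb{R}[[\nu]]$-bilinearly, where the $C_r$ are bidifferential operators with: $C_0(f,g)=fg$; $C_r(c,f)=C_r(f,c)=0$ for $r\ge1$ and constants $c$; associativity $\sum_{s+t=r}C_s(C_t(f,g),h)=\sum_{s+t=r}C_s(f,C_t(g,h))$; and $C_1(f,g)-C_1(g,f)=2P(f,g)$. Two star-products $\ast_\nu,\ast_\nu'$ are equivalent if there is $T=I+\sum_{r\ge1}\nu^rT_r$ with $T_r$ differential operators on $\mathsf{N}$ vanishing on constants such that $T(f\ast_\nu g)=T(f)\ast_\nu'T(g)$ for all $f,g\in\mathsf{N}[[\nu]]$. The sun-product cochains $\rho_r:\mathsf{Pol}\to\mathsf{N}$ of $\ast_\nu$ are the linear maps determined by $\rho(1)=1$ and $\rho(x_{i_1}\cdots x_{i_k})=\frac1{k!}\sum_{\sigma\in S_k}x_{i_{\sigma(1)}}\ast_\nu\cdots\ast_\nu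 x_{i_{\sigma(k)}}=\sum_{r\ge0}\nu^r\rho_r(x_{i_1}\cdots x_{i_k})$; the associated sun-product is $f\odot_\nu g=\rho(\pi(fg))$ with $\pi$ taking the $\nu^0$-coefficient. *)

theory Defs
  imports "HOL-Analysis.Analysis" "HOL-Combinatorics.Permutations"
begin

type_synonym 'n fn = "real^'n \<Rightarrow> real"

definition partial :: "'n::finite \<Rightarrow> 'n fn \<Rightarrow> 'n fn" where
  "partial i f = (\<lambda>x. deriv (\<lambda>t. f (x + t *\<^sub>R axis i 1)) 0)"

fun pderivs :: "'n::finite list \<Rightarrow> 'n fn \<Rightarrow> 'n fn" where
  "pderivs [] f = f"
| "pderivs (i # is) f = partial i (pderivs is f)"

definition smooth :: "'n::finite fn \<Rightarrow> bool" where
  "smooth f \<longleftrightarrow> (\<forall>is x. pderivs is f differentiable (at x))"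

definition idx_lists :: "nat \<Rightarrow> 'n::finite list set" where
  "idx_lists k = {\<alpha>. length \<alpha> \<le> k}"

definition diff_op :: "('n::finite fn \<Rightarrow> 'n fn) \<Rightarrow> bool" where
  "diff_op D \<longleftrightarrow> (\<exists>k a. (\<forall>\<alpha>. smooth (a \<alpha>)) \<and>
     (\<forall>f. smooth f \<longrightarrow> D f = (\<lambda>x. \<Sum>\<alpha>\<in>idx_lists k. a \<alpha> x * pderivs \<alpha> f x)))"

definition bidiff_op :: "('n::finite fn \<Rightarrow> 'n fn \<Rightarrow> 'n fn) \<Rightarrow> bool" where
  "bidiff_op B \<longleftrightarrow> (\<exists>k a. (\<forall>\<alpha> \<beta>. smooth (a \<alpha> \<beta>)) \<and>
     (\<forall>f g. smooth f \<longrightarrow> smooth g \<longrightarrow>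
        B f g = (\<lambda>x. \<Sum>\<alpha>\<in>idx_lists k. \<Sum>\<beta>\<in>idx_lists k.
                        a \<alpha> \<beta> x * pderivs \<alpha> f x * pderivs \<beta> g x)))"

definition poisson_bracket :: "('n::finite fn \<Rightarrow> 'n fn \<Rightarrow> 'n fn) \<Rightarrow> bool" where
  "poisson_bracket P \<longleftrightarrow>
     (\<forall>f g. smooth f \<longrightarrow> smooth g \<longrightarrow> smooth (P f g)) \<and>
     (\<forall>a b f g h. smooth f \<longrightarrow> smooth g \<longrightarrow> smooth h \<longrightarrow>
        P (\<lambda>x. a * f x + b * g x) h = (\<lambda>x. a * P f h x + b * P g h x)) \<and>
     (\<forall>f g. smooth f \<longrightarrow> smooth g \<longrightarrow> P f g = (\<lambda>x. - P g f x)) \<and>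
     (\<forall>f g h. smooth f \<longrightarrow> smooth g \<longrightarrow> smooth h \<longrightarrow>
        (\<lambda>x. P f (P g h) x + P g (P h f) x + P h (P f g) x) = (\<lambda>x. 0)) \<and>
     (\<forall>f g h. smooth f \<longrightarrow> smooth g \<longrightarrow> smooth h \<longrightarrow>
        P f (\<lambda>x. g x * h x) = (\<lambda>x. P f g x * h x + g x * P f h x))"

text \<open>A differential star-product f * g = sum_r nu^r C_r(f,g) on (R^n, P).\<close>
definition star_product ::
  "('n::finite fn \<Rightarrow> 'n fn \<Rightarrow> 'n fn) \<Rightarrow> (nat \<Rightarrow> 'n fn \<Rightarrow> 'n fn \<Rightarrow> 'n fn) \<Rightarrow> bool" where
  "star_product P C \<longleftrightarrow>
     (\<forall>r. bidiff_op (C r)) \<and>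
     (\<forall>f g. smooth f \<longrightarrow> smooth g \<longrightarrow> C 0 f g = (\<lambda>x. f x * g x)) \<and>
     (\<forall>r c f. r \<ge> 1 \<longrightarrow> smooth f \<longrightarrow>
        C r (\<lambda>x. c) f = (\<lambda>x. 0) \<and> C r f (\<lambda>x. c) = (\<lambda>x. 0)) \<and>
     (\<forall>r f g h. smooth f \<longrightarrow> smooth g \<longrightarrow> smooth h \<longrightarrow>
        (\<lambda>x. \<Sum>s\<le>r. C s (C (r - s) f g) h x) = (\<lambda>x. \<Sum>s\<le>r. C s f (C (r - s) g h) x)) \<and>
     (\<forall>f g. smooth f \<longrightarrow> smooth g \<longrightarrow>
        (\<lambda>x. C 1 f g x - C 1 g f x) = (\<lambda>x. 2 * P f g x))"

text \<open>Equivalence of star-products via T = I + sum_{r>=1} nu^r T_r.  The identity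
  T(f * g) = T f *' T g for f,g in N[[nu]] is written coefficientwise for f,g in N,
  which is equivalent by R[[nu]]-(bi)linearity.\<close>
definition star_equiv ::
  "(nat \<Rightarrow> 'n::finite fn \<Rightarrow> 'n fn \<Rightarrow> 'n fn) \<Rightarrow> (nat \<Rightarrow> 'n fn \<Rightarrow> 'n fn \<Rightarrow> 'n fn) \<Rightarrow> bool" where
  "star_equiv C C' \<longleftrightarrow> (\<exists>T :: nat \<Rightarrow> 'n fn \<Rightarrow> 'n fn.
     (\<forall>f. smooth f \<longrightarrow> T 0 f = f) \<and>
     (\<forall>r c. r \<ge> 1 \<longrightarrow> diff_op (T r) \<and> T r (\<lambda>x. c) = (\<lambda>x. 0)) \<and>
     (\<forall>f g r. smooth f \<longrightarrow> smooth g \<longrightarrow>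
        (\<lambda>x. \<Sum>s\<le>r. T s (C (r - s) f g) x) =
        (\<lambda>x. \<Sum>a\<le>r. \<Sum>b\<le>r - a. C' a (T b f) (T (r - a - b) g) x)))"

definition ser_star ::
  "(nat \<Rightarrow> 'n::finite fn \<Rightarrow> 'n fn \<Rightarrow> 'n fn) \<Rightarrow> (nat \<Rightarrow> 'n fn) \<Rightarrow> (nat \<Rightarrow> 'n fn) \<Rightarrow> nat \<Rightarrow> 'n fn" where
  "ser_star C F G r = (\<lambda>x. \<Sum>s\<le>r. \<Sum>t\<le>r - s. C s (F t) (G (r - s - t)) x)"

definition const_ser :: "'n::finite fn \<Rightarrow> nat \<Rightarrow> 'n fn" where
  "const_ser f r = (if r = 0 then f else (\<lambda>x. 0))"

definition coord :: "'n::finite \<Rightarrow> 'n fn" where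
  "coord i = (\<lambda>x. x $ i)"

fun star_list :: "(nat \<Rightarrow> 'n::finite fn \<Rightarrow> 'n fn \<Rightarrow> 'n fn) \<Rightarrow> 'n list \<Rightarrow> nat \<Rightarrow> 'n fn" where
  "star_list C [] = const_ser (\<lambda>x. 1)"
| "star_list C (i # is) = ser_star C (const_ser (coord i)) (star_list C is)"

text \<open>Sun-product cochain rho_r evaluated on the monomial x_{i_1}...x_{i_k}
  (the rho_r are linear on Pol, so they are determined by these values).\<close>
definition sun_cochain :: "(nat \<Rightarrow> 'n::finite fn \<Rightarrow> 'n fn \<Rightarrow> 'n fn) \<Rightarrow> nat \<Rightarrow> 'n list \<Rightarrow> 'n fn" where
  "sun_cochain C r is = (\<lambda>x. (1 / fact (length is)) *
      (\<Sum>\<sigma>\<in>{\<sigma>. \<sigma> permutes {0..<length is}}.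
          star_list C (map (\<lambda>j. is ! \<sigma> j) [0..<length is]) r x))"

end

theory Submission
  imports Defs "HOL-Combinatorics.Multiset_Permutations"
begin


lemma pderivs_append: "pderivs (is @ js) f = pderivs is (pderivs js f)"
  by (induct "is") auto

lemma line_has_deriv:
  assumes "f differentiable (at x)"
  shows "((\<lambda>t. f (x + t *\<^sub>R axis i 1)) has_real_derivative partial i f x) (at 0)"
proof -
  have hl: "((\<lambda>t::real. x + t *\<^sub>R axis i (1::real)) has_derivative (\<lambda>t. t *\<^sub>R axis i 1)) (at 0)"
    by (auto intro!: derivative_eq_intros)
  have "(\<lambda>t::real. x + t *\<^sub>R axis i (1::real)) differentiable (at 0)"
    using hl by (auto simp: differentiable_def)
  moreover have "f differentiable (at ((\<lambda>t::real. x + t *\<^sub>R axis i (1::real)) 0))"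
    using assms by simp
  ultimately have "(f \<circ> (\<lambda>t::real. x + t *\<^sub>R axis i (1::real))) differentiable (at 0)"
    by (rule differentiable_chain_at)
  then have "(\<lambda>t. f (x + t *\<^sub>R axis i 1)) differentiable (at 0)" by (simp add: o_def)
  then show ?thesis
    unfolding partial_def by (simp add: DERIV_deriv_iff_real_differentiable)
qed

lemma partial_add:
  assumes "f differentiable (at x)" "g differentiable (at x)"
  shows "partial i (\<lambda>y. f y + g y) x = partial i f x + partial i g x"
proof -
  have "((\<lambda>t. f (x + t *\<^sub>R axis i 1) + g (x + t *\<^sub>R axis i 1)) has_real_derivative
     partial i f x + partial i g x) (at 0)"
    by (intro DERIV_add line_has_deriv assms)
  then show ?thesis unfolding partial_def[of i "\<lambda>y. f y + g y"] by (rule DERIV_imp_deriv)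
qed

lemma partial_mult:
  assumes "f differentiable (at x)" "g differentiable (at x)"
  shows "partial i (\<lambda>y. f y * g y) x = partial i f x * g x + f x * partial i g x"
proof -
  have "((\<lambda>t. f (x + t *\<^sub>R axis i 1) * g (x + t *\<^sub>R axis i 1)) has_real_derivative
     partial i f x * g (x + 0 *\<^sub>R axis i 1) + f (x + 0 *\<^sub>R axis i 1) * partial i g x) (at 0)"
    using DERIV_mult[OF line_has_deriv[OF assms(1)] line_has_deriv[OF assms(2)], of i i] by (simp add: mult.commute)
  then show ?thesis unfolding partial_def[of i "\<lambda>y. f y * g y"]
    by (simp add: DERIV_imp_deriv)
qed

lemma partial_cmult:
  assumes "f differentiable (at x)"
  shows "partial i (\<lambda>y. c * f y) x = c * partial i f x"
proof -
  have "((\<lambda>t. c * f (x + t *\<^sub>R axis i 1)) has_real_derivative c * partial i f x) (at 0)"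
    by (intro DERIV_cmult line_has_deriv assms)
  then show ?thesis unfolding partial_def[of i "\<lambda>y. c * f y"] by (rule DERIV_imp_deriv)
qed

lemma partial_const [simp]: "partial i (\<lambda>y. c) = (\<lambda>x. 0)"
  unfolding partial_def by (simp add: deriv_const)

lemma partial_coord: "partial i (coord j) = (\<lambda>x. if i = j then 1 else 0)"
proof
  fix x
  have "((\<lambda>t. x $ j + t * axis i 1 $ j) has_real_derivative axis i 1 $ j) (at 0)"
    by (auto intro!: derivative_eq_intros)
  then have "partial i (coord j) x = axis i 1 $ j"
    unfolding partial_def coord_def by (simp add: DERIV_imp_deriv)
  then show "partial i (coord j) x = (if i = j then 1 else 0)"
    by (simp add: axis_def)
qed

lemma partial_sum:
  assumes "finite A" "\<And>a. a \<in> A \<Longrightarrow> h a differentiable (at x)"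
  shows "partial i (\<lambda>y. \<Sum>a\<in>A. h a y) x = (\<Sum>a\<in>A. partial i (h a) x)"
  using assms
proof (induct A rule: finite_induct)
  case empty
  then show ?case by simp
next
  case (insert a A)
  have d: "(\<lambda>y. \<Sum>a\<in>A. h a y) differentiable (at x)"
    using insert by (intro differentiable_sum) auto
  have "partial i (\<lambda>y. \<Sum>a\<in>insert a A. h a y) x = partial i (\<lambda>y. h a y + (\<Sum>a\<in>A. h a y)) x"
    using insert by simp
  also have "\<dots> = partial i (h a) x + partial i (\<lambda>y. \<Sum>a\<in>A. h a y) x"
    using partial_add[OF _ d, of "h a"] insert by simp
  finally show ?case using insert by simp
qed

lemma partial_sum_list:
  assumes "\<And>a. a \<in> set xs \<Longrightarrow> h a differentiable (at x)"
  shows "partial i (\<lambda>y. \<Sum>a\<leftarrow>xs. h a y) x = (\<Sum>a\<leftarrow>xs. partial i (h a) x)"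
  using assms
proof (induct xs)
  case Nil
  then show ?case by simp
next
  case (Cons a xs)
  have d: "(\<lambda>y. \<Sum>a\<leftarrow>xs. h a y) differentiable (at x)"
  proof -
    have "\<forall>a\<in>set xs. h a differentiable (at x)" using Cons by auto
    then show ?thesis by (induct xs) (auto intro!: differentiable_add)
  qed
  have "partial i (\<lambda>y. \<Sum>a\<leftarrow>a#xs. h a y) x = partial i (\<lambda>y. h a y + (\<Sum>a\<leftarrow>xs. h a y)) x"
    by simp
  also have "\<dots> = partial i (h a) x + partial i (\<lambda>y. \<Sum>a\<leftarrow>xs. h a y) x"
    using partial_add[OF _ d, of "h a"] Cons by simp
  finally show ?case using Cons by simp
qed


lemma smooth_diff: "smooth f \<Longrightarrow> pderivs is f differentiable (at x)"
  unfolding smooth_def by blast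

lemma smooth_pderivs: "smooth f \<Longrightarrow> smooth (pderivs is f)"
  unfolding smooth_def by (simp add: pderivs_append[symmetric])

lemma smooth_partial: "smooth f \<Longrightarrow> smooth (partial i f)"
  using smooth_pderivs[of f "[i]"] by simp

lemma pderivs_add:
  assumes "smooth f" "smooth g"
  shows "pderivs is (\<lambda>x. f x + g x) = (\<lambda>x. pderivs is f x + pderivs is g x)"
proof (induct "is")
  case Nil
  then show ?case by simp
next
  case (Cons i "is")
  show ?case
    by (rule ext, simp add: Cons partial_add smooth_diff assms)
qed

lemma smooth_add: "smooth f \<Longrightarrow> smooth g \<Longrightarrow> smooth (\<lambda>x. f x + g x)"
  unfolding smooth_def[of "\<lambda>x. f x + g x"]
  by (auto simp: pderivs_add intro!: differentiable_add smooth_diff)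

lemma pderivs_cmult:
  assumes "smooth f"
  shows "pderivs is (\<lambda>x. c * f x) = (\<lambda>x. c * pderivs is f x)"
proof (induct "is")
  case Nil
  then show ?case by simp
next
  case (Cons i "is")
  show ?case
    by (rule ext, simp add: Cons partial_cmult smooth_diff assms)
qed

lemma smooth_cmult: "smooth f \<Longrightarrow> smooth (\<lambda>x. c * f x)"
  unfolding smooth_def[of "\<lambda>x. c * f x"]
  by (auto simp: pderivs_cmult intro!: differentiable_mult smooth_diff)

lemma pderivs_const: "pderivs is (\<lambda>x. c) = (\<lambda>x. if is = [] then c else 0)"
  by (induct "is") auto

lemma smooth_const: "smooth (\<lambda>x. c)"
  unfolding smooth_def by (simp add: pderivs_const)

lemma smooth_zero: "smooth (\<lambda>x. 0)"
  by (rule smooth_const)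

lemma pderivs_coord: "pderivs is (coord j) = (\<lambda>x. case is of [] \<Rightarrow> x $ j | [i] \<Rightarrow> (if i = j then 1 else 0) | _ \<Rightarrow> 0)"
proof (induct "is")
  case Nil
  then show ?case by (simp add: coord_def)
next
  case (Cons i "is")
  show ?case
  proof (cases "is")
    case Nil
    then show ?thesis by (simp add: partial_coord)
  next
    case (Cons k ks)
    then have "pderivs is (coord j) = (\<lambda>x. if ks = [] then (if k = j then 1 else 0) else 0)"
      using Cons.hyps by (auto split: list.splits)
    then show ?thesis using Cons by (auto split: list.splits if_splits)
  qed
qed

lemma smooth_coord: "smooth (coord j)"
  unfolding smooth_def pderivs_coord
proof (intro allI)
  fix "is" :: "'a list" and x :: "real^'a"
  show "(\<lambda>x. case is of [] \<Rightarrow> x $ j | [i] \<Rightarrow> (if i = j then 1 else 0) | _ \<Rightarrow> 0) differentiable (at x)"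
  proof (cases "is")
    case Nil
    then show ?thesis by (simp add: bounded_linear_imp_differentiable bounded_linear_vec_nth)
  next
    case (Cons k ks)
    then show ?thesis by (cases ks) simp_all
  qed
qed

lemma pderivs_sum:
  assumes "finite A" "\<And>a. a \<in> A \<Longrightarrow> smooth (h a)"
  shows "pderivs is (\<lambda>x. \<Sum>a\<in>A. h a x) = (\<lambda>x. \<Sum>a\<in>A. pderivs is (h a) x)"
proof (induct "is")
  case Nil
  then show ?case by simp
next
  case (Cons i "is")
  show ?case
    by (rule ext, simp add: Cons, rule partial_sum, auto intro: assms smooth_diff)
qed

lemma smooth_sum: "finite A \<Longrightarrow> (\<And>a. a \<in> A \<Longrightarrow> smooth (h a)) \<Longrightarrow> smooth (\<lambda>x. \<Sum>a\<in>A. h a x)"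
  unfolding smooth_def[of "\<lambda>x. \<Sum>a\<in>A. h a x"]
  by (auto simp: pderivs_sum intro!: differentiable_sum smooth_diff)

fun splits :: "'a list \<Rightarrow> ('a list \<times> 'a list) list" where
  "splits [] = [([], [])]"
| "splits (i # is) = concat (map (\<lambda>(a, b). [(i # a, b), (a, i # b)]) (splits is))"

lemma splits_length: "(a, b) \<in> set (splits is) \<Longrightarrow> length a + length b = length is"
  by (induct "is" arbitrary: a b) auto

lemma sum_list_concat_pairs:
  "(\<Sum>p\<leftarrow>concat (map (\<lambda>p. [u p, v p]) xs). h p) = (\<Sum>p\<leftarrow>xs. h (u p) + h (v p))"
  by (induct xs) (auto simp: add.assoc)

lemma differentiable_sum_list:
  "(\<And>a. a \<in> set xs \<Longrightarrow> h a differentiable (at x)) \<Longrightarrow> (\<lambda>y. \<Sum>a\<leftarrow>xs. h a y) differentiable (at x)"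
  by (induct xs) (auto intro!: differentiable_add)

lemma pderivs_mult:
  assumes "smooth f" "smooth g"
  shows "pderivs is (\<lambda>x. f x * g x) = (\<lambda>x. \<Sum>(a,b)\<leftarrow>splits is. pderivs a f x * pderivs b g x)"
proof (induct "is")
  case Nil
  then show ?case by simp
next
  case (Cons i "is")
  show ?case
  proof
    fix x
    have "pderivs (i # is) (\<lambda>x. f x * g x) x =
      partial i (\<lambda>x. \<Sum>p\<leftarrow>splits is. (\<lambda>p x. pderivs (fst p) f x * pderivs (snd p) g x) p x) x"
      by (simp add: Cons case_prod_beta)
    also have "\<dots> = (\<Sum>p\<leftarrow>splits is. partial i (\<lambda>x. pderivs (fst p) f x * pderivs (snd p) g x) x)"
      by (rule partial_sum_list) (auto intro!: differentiable_mult smooth_diff assms)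
    also have "\<dots> = (\<Sum>p\<leftarrow>splits is. pderivs (i # fst p) f x * pderivs (snd p) g x
                     + pderivs (fst p) f x * pderivs (i # snd p) g x)"
      by (intro arg_cong[where f=sum_list] map_cong refl)
         (simp add: partial_mult smooth_diff assms)
    also have "\<dots> = (\<Sum>(a,b)\<leftarrow>splits (i # is). pderivs a f x * pderivs b g x)"
      by (simp add: sum_list_concat_pairs split_def)
    finally show "pderivs (i # is) (\<lambda>x. f x * g x) x = (\<Sum>(a,b)\<leftarrow>splits (i # is). pderivs a f x * pderivs b g x)" .
  qed
qed

lemma smooth_mult: "smooth f \<Longrightarrow> smooth g \<Longrightarrow> smooth (\<lambda>x. f x * g x)"
  unfolding smooth_def[of "\<lambda>x. f x * g x"]
  by (auto simp: pderivs_mult case_prod_beta intro!: differentiable_sum_list differentiable_mult smooth_diff)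

lemma smooth_prod: "finite A \<Longrightarrow> (\<And>a. a \<in> A \<Longrightarrow> smooth (h a)) \<Longrightarrow> smooth (\<lambda>x. \<Prod>a\<in>A. h a x)"
  by (induct A rule: finite_induct) (auto intro!: smooth_mult simp: smooth_const)



lemma smooth_diff0: "smooth f \<Longrightarrow> f differentiable (at x)"
  using smooth_diff[of f "[]"] by simp

lemma finite_idx_lists [simp]: "finite (idx_lists k :: 'n::finite list set)"
  unfolding idx_lists_def using finite_lists_length_le[of "UNIV::'n set" k] by simp

lemma diff_op_gen:
  fixes c :: "'b \<Rightarrow> 'n::finite fn" and \<gamma> :: "'b \<Rightarrow> 'n list"
  assumes B: "finite B" and cs: "\<And>b. b \<in> B \<Longrightarrow> smooth (c b)"
    and D: "\<And>f. smooth f \<Longrightarrow> D f = (\<lambda>x. \<Sum>b\<in>B. c b x * pderivs (\<gamma> b) f x)"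
  shows "diff_op D"
proof -
  define k where "k = Max (insert 0 (length ` \<gamma> ` B))"
  have sub: "\<gamma> ` B \<subseteq> idx_lists k"
    using B by (auto simp: idx_lists_def k_def)
  define a where "a \<alpha> = (\<lambda>x. \<Sum>b\<in>{b\<in>B. \<gamma> b = \<alpha>}. c b x)" for \<alpha>
  have "smooth (a \<alpha>)" for \<alpha>
    unfolding a_def using B by (intro smooth_sum) (auto intro: cs)
  moreover have "D f = (\<lambda>x. \<Sum>\<alpha>\<in>idx_lists k. a \<alpha> x * pderivs \<alpha> f x)" if "smooth f" for f
  proof
    fix x
    have "(\<Sum>\<alpha>\<in>idx_lists k. a \<alpha> x * pderivs \<alpha> f x) =
        (\<Sum>\<alpha>\<in>idx_lists k. \<Sum>b\<in>{b\<in>B. \<gamma> b = \<alpha>}. c b x * pderivs (\<gamma> b) f x)"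
      unfolding a_def by (auto simp: sum_distrib_right intro!: sum.cong)
    also have "\<dots> = (\<Sum>b\<in>B. c b x * pderivs (\<gamma> b) f x)"
      by (rule sum.group[OF B finite_idx_lists sub])
    finally show "D f x = (\<Sum>\<alpha>\<in>idx_lists k. a \<alpha> x * pderivs \<alpha> f x)"
      using D[OF that] by simp
  qed
  ultimately show ?thesis unfolding diff_op_def by blast
qed

lemma bidiff_op_gen:
  fixes c :: "'b \<Rightarrow> 'n::finite fn" and \<gamma>1 \<gamma>2 :: "'b \<Rightarrow> 'n list"
  assumes B: "finite B" and cs: "\<And>b. b \<in> B \<Longrightarrow> smooth (c b)"
    and D: "\<And>f g. smooth f \<Longrightarrow> smooth g \<Longrightarrow>
       D f g = (\<lambda>x. \<Sum>b\<in>B. c b x * pderivs (\<gamma>1 b) f x * pderivs (\<gamma>2 b) g x)"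
  shows "bidiff_op D"
proof -
  define k where "k = Max (insert 0 (length ` \<gamma>1 ` B \<union> length ` \<gamma>2 ` B))"
  have sub: "(\<lambda>b. (\<gamma>1 b, \<gamma>2 b)) ` B \<subseteq> idx_lists k \<times> idx_lists k"
    using B by (auto simp: idx_lists_def k_def)
  define a where "a \<alpha> \<beta> = (\<lambda>x. \<Sum>b\<in>{b\<in>B. (\<gamma>1 b, \<gamma>2 b) = (\<alpha>, \<beta>)}. c b x)" for \<alpha> \<beta>
  have "smooth (a \<alpha> \<beta>)" for \<alpha> \<beta>
    unfolding a_def using B by (intro smooth_sum) (auto intro: cs)
  moreover have "D f g = (\<lambda>x. \<Sum>\<alpha>\<in>idx_lists k. \<Sum>\<beta>\<in>idx_lists k. a \<alpha> \<beta> x * pderivs \<alpha> f x * pderivs \<beta> g x)"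
    if "smooth f" "smooth g" for f g
  proof
    fix x
    have "(\<Sum>\<alpha>\<in>idx_lists k. \<Sum>\<beta>\<in>idx_lists k. a \<alpha> \<beta> x * pderivs \<alpha> f x * pderivs \<beta> g x) =
        (\<Sum>p\<in>idx_lists k \<times> idx_lists k. a (fst p) (snd p) x * pderivs (fst p) f x * pderivs (snd p) g x)"
      by (simp add: sum.cartesian_product case_prod_beta)
    also have "\<dots> = (\<Sum>p\<in>idx_lists k \<times> idx_lists k. \<Sum>b\<in>{b\<in>B. (\<gamma>1 b, \<gamma>2 b) = p}.
           c b x * pderivs (\<gamma>1 b) f x * pderivs (\<gamma>2 b) g x)"
      unfolding a_def by (auto simp: sum_distrib_right intro!: sum.cong)
    also have "\<dots> = (\<Sum>b\<in>B. c b x * pderivs (\<gamma>1 b) f x * pderivs (\<gamma>2 b) g x)"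
      by (rule sum.group[OF B _ sub]) simp
    finally show "D f g x = (\<Sum>\<alpha>\<in>idx_lists k. \<Sum>\<beta>\<in>idx_lists k. a \<alpha> \<beta> x * pderivs \<alpha> f x * pderivs \<beta> g x)"
      using D[OF that] by simp
  qed
  ultimately show ?thesis unfolding bidiff_op_def by blast
qed

lemma diff_opE:
  assumes "diff_op D"
  obtains k a where "\<And>\<alpha>. smooth (a \<alpha>)"
    "\<And>f. smooth f \<Longrightarrow> D f = (\<lambda>x. \<Sum>\<alpha>\<in>idx_lists k. a \<alpha> x * pderivs \<alpha> f x)"
proof -
  from assms obtain k a where h: "\<forall>\<alpha>. smooth (a \<alpha>)"
    "\<forall>f. smooth f \<longrightarrow> D f = (\<lambda>x. \<Sum>\<alpha>\<in>idx_lists k. a \<alpha> x * pderivs \<alpha> f x)"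
    unfolding diff_op_def by blast
  show thesis by (rule that[of a k]) (use h in auto)
qed

lemma bidiff_opE:
  assumes "bidiff_op D"
  obtains k a where "\<And>\<alpha> \<beta>. smooth (a \<alpha> \<beta>)"
    "\<And>f g. smooth f \<Longrightarrow> smooth g \<Longrightarrow>
       D f g = (\<lambda>x. \<Sum>\<alpha>\<in>idx_lists k. \<Sum>\<beta>\<in>idx_lists k. a \<alpha> \<beta> x * pderivs \<alpha> f x * pderivs \<beta> g x)"
proof -
  from assms obtain k a where h: "\<forall>\<alpha> \<beta>. smooth (a \<alpha> \<beta>)"
    "\<forall>f g. smooth f \<longrightarrow> smooth g \<longrightarrow>
       D f g = (\<lambda>x. \<Sum>\<alpha>\<in>idx_lists k. \<Sum>\<beta>\<in>idx_lists k. a \<alpha> \<beta> x * pderivs \<alpha> f x * pderivs \<beta> g x)"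
    unfolding bidiff_op_def by blast
  show thesis by (rule that[of a k]) (use h in auto)
qed

lemma diff_op_smooth:
  assumes "diff_op D" "smooth f" shows "smooth (D f)"
proof -
  obtain k a where a: "\<And>\<alpha>. smooth (a \<alpha>)"
    "\<And>f. smooth f \<Longrightarrow> D f = (\<lambda>x. \<Sum>\<alpha>\<in>idx_lists k. a \<alpha> x * pderivs \<alpha> f x)"
    using assms(1) by (rule diff_opE) blast
  show ?thesis unfolding a(2)[OF assms(2)]
    by (intro smooth_sum finite_idx_lists smooth_mult smooth_pderivs a assms(2))
qed

lemma bidiff_op_smooth:
  assumes "bidiff_op D" "smooth f" "smooth g" shows "smooth (D f g)"
proof -
  obtain k a where a: "\<And>\<alpha> \<beta>. smooth (a \<alpha> \<beta>)"
    "\<And>f g. smooth f \<Longrightarrow> smooth g \<Longrightarrow>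
       D f g = (\<lambda>x. \<Sum>\<alpha>\<in>idx_lists k. \<Sum>\<beta>\<in>idx_lists k. a \<alpha> \<beta> x * pderivs \<alpha> f x * pderivs \<beta> g x)"
    using assms(1) by (rule bidiff_opE) blast
  show ?thesis unfolding a(2)[OF assms(2,3)]
    by (intro smooth_sum finite_idx_lists smooth_mult smooth_pderivs a assms(2,3))
qed

lemma diff_op_cong: "diff_op D \<Longrightarrow> (\<And>f. smooth f \<Longrightarrow> D' f = D f) \<Longrightarrow> diff_op D'"
  unfolding diff_op_def
proof (elim exE conjE)
  fix k a assume "\<forall>\<alpha>. smooth (a \<alpha>)" "\<forall>f. smooth f \<longrightarrow> D f = (\<lambda>x. \<Sum>\<alpha>\<in>idx_lists k. a \<alpha> x * pderivs \<alpha> f x)"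
    "\<And>f. smooth f \<Longrightarrow> D' f = D f"
  then show "\<exists>k a. (\<forall>\<alpha>. smooth (a \<alpha>)) \<and> (\<forall>f. smooth f \<longrightarrow> D' f = (\<lambda>x. \<Sum>\<alpha>\<in>idx_lists k. a \<alpha> x * pderivs \<alpha> f x))"
    by (intro exI[of _ k] exI[of _ a]) simp
qed

lemma bidiff_op_cong: "bidiff_op D \<Longrightarrow> (\<And>f g. smooth f \<Longrightarrow> smooth g \<Longrightarrow> D' f g = D f g) \<Longrightarrow> bidiff_op D'"
  unfolding bidiff_op_def
proof (elim exE conjE)
  fix k a assume "\<forall>\<alpha> \<beta>. smooth (a \<alpha> \<beta>)" "\<forall>f g. smooth f \<longrightarrow> smooth g \<longrightarrow>
        D f g = (\<lambda>x. \<Sum>\<alpha>\<in>idx_lists k. \<Sum>\<beta>\<in>idx_lists k. a \<alpha> \<beta> x * pderivs \<alpha> f x * pderivs \<beta> g x)"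
    "\<And>f g. smooth f \<Longrightarrow> smooth g \<Longrightarrow> D' f g = D f g"
  then show "\<exists>k a. (\<forall>\<alpha> \<beta>. smooth (a \<alpha> \<beta>)) \<and> (\<forall>f g. smooth f \<longrightarrow> smooth g \<longrightarrow>
        D' f g = (\<lambda>x. \<Sum>\<alpha>\<in>idx_lists k. \<Sum>\<beta>\<in>idx_lists k. a \<alpha> \<beta> x * pderivs \<alpha> f x * pderivs \<beta> g x))"
    by (intro exI[of _ k] exI[of _ a]) simp
qed

lemma diff_op_id: "diff_op (\<lambda>f. f)"
  by (rule diff_op_gen[of "{()}" "\<lambda>_ x. 1" _ "\<lambda>_. []"]) (auto simp: smooth_const)

lemma diff_op_zero: "diff_op (\<lambda>f x. 0)"
  by (rule diff_op_gen[of "{}"]) auto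

lemma diff_op_pderivs: "diff_op (pderivs \<alpha>)"
  by (rule diff_op_gen[of "{()}" "\<lambda>_ x. 1" _ "\<lambda>_. \<alpha>"]) (auto simp: smooth_const)

lemma diff_op_mult:
  assumes "diff_op D" "smooth h"
  shows "diff_op (\<lambda>f x. h x * D f x)"
proof -
  obtain k a where a: "\<And>\<alpha>. smooth (a \<alpha>)"
    "\<And>f. smooth f \<Longrightarrow> D f = (\<lambda>x. \<Sum>\<alpha>\<in>idx_lists k. a \<alpha> x * pderivs \<alpha> f x)"
    using assms(1) by (rule diff_opE) blast
  show ?thesis
    by (rule diff_op_gen[of "idx_lists k" "\<lambda>\<alpha> x. h x * a \<alpha> x" _ "\<lambda>\<alpha>. \<alpha>"])
       (auto simp: a sum_distrib_left mult.assoc intro!: smooth_mult assms)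
qed

lemma diff_op_add:
  assumes "diff_op D1" "diff_op D2"
  shows "diff_op (\<lambda>f x. D1 f x + D2 f x)"
proof -
  obtain k1 a1 where a1: "\<And>\<alpha>. smooth (a1 \<alpha>)"
    "\<And>f. smooth f \<Longrightarrow> D1 f = (\<lambda>x. \<Sum>\<alpha>\<in>idx_lists k1. a1 \<alpha> x * pderivs \<alpha> f x)"
    using assms(1) by (rule diff_opE) blast
  obtain k2 a2 where a2: "\<And>\<alpha>. smooth (a2 \<alpha>)"
    "\<And>f. smooth f \<Longrightarrow> D2 f = (\<lambda>x. \<Sum>\<alpha>\<in>idx_lists k2. a2 \<alpha> x * pderivs \<alpha> f x)"
    using assms(2) by (rule diff_opE) blast
  have e: "(\<Sum>b\<in>Inl ` idx_lists k1 \<union> Inr ` idx_lists k2. F b) =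
     (\<Sum>\<alpha>\<in>idx_lists k1. F (Inl \<alpha>)) + (\<Sum>\<alpha>\<in>idx_lists k2. F (Inr \<alpha>))" for F :: "_ \<Rightarrow> real"
    by (subst sum.union_disjoint) (auto simp: sum.reindex)
  show ?thesis
    by (rule diff_op_gen[of "Inl ` idx_lists k1 \<union> Inr ` idx_lists k2"
          "case_sum a1 a2" _ "case_sum (\<lambda>\<alpha>. \<alpha>) (\<lambda>\<alpha>. \<alpha>)"])
       (auto simp: a1 a2 e)
qed

lemma diff_op_sum:
  "finite A \<Longrightarrow> (\<And>a. a \<in> A \<Longrightarrow> diff_op (D a)) \<Longrightarrow> diff_op (\<lambda>f x. \<Sum>a\<in>A. D a f x)"
proof (induct A rule: finite_induct)
  case empty
  then show ?case using diff_op_zero by simp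
next
  case (insert a A)
  then show ?case using diff_op_add[of "D a" "\<lambda>f x. \<Sum>a\<in>A. D a f x"] by simp
qed

lemma diff_op_partial:
  assumes "diff_op D"
  shows "diff_op (\<lambda>f. partial i (D f))"
proof -
  obtain k a where a: "\<And>\<alpha>. smooth (a \<alpha>)"
    "\<And>f. smooth f \<Longrightarrow> D f = (\<lambda>x. \<Sum>\<alpha>\<in>idx_lists k. a \<alpha> x * pderivs \<alpha> f x)"
    using assms(1) by (rule diff_opE) blast
  have "diff_op (\<lambda>f x. (\<Sum>\<alpha>\<in>idx_lists k. partial i (a \<alpha>) x * pderivs \<alpha> f x) +
                         (\<Sum>\<alpha>\<in>idx_lists k. a \<alpha> x * pderivs (i # \<alpha>) f x))"
    by (intro diff_op_add diff_op_gen[OF finite_idx_lists, where \<gamma>="\<lambda>\<alpha>. \<alpha>"]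
          diff_op_gen[OF finite_idx_lists, where \<gamma>="\<lambda>\<alpha>. i # \<alpha>"])
       (auto intro: smooth_partial a)
  then show ?thesis
  proof (rule diff_op_cong)
    fix f :: "'a fn" assume f: "smooth f"
    show "partial i (D f) = (\<lambda>x. (\<Sum>\<alpha>\<in>idx_lists k. partial i (a \<alpha>) x * pderivs \<alpha> f x) +
                         (\<Sum>\<alpha>\<in>idx_lists k. a \<alpha> x * pderivs (i # \<alpha>) f x))"
    proof
      fix x
      have "partial i (D f) x = (\<Sum>\<alpha>\<in>idx_lists k. partial i (\<lambda>x. a \<alpha> x * pderivs \<alpha> f x) x)"
        unfolding a(2)[OF f]
        by (rule partial_sum) (auto intro!: smooth_diff0 smooth_mult smooth_pderivs a f)
      also have "\<dots> = (\<Sum>\<alpha>\<in>idx_lists k. partial i (a \<alpha>) x * pderivs \<alpha> f x + a \<alpha> x * pderivs (i # \<alpha>) f x)"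
        by (intro sum.cong refl) (simp add: partial_mult smooth_diff smooth_diff0 a f)
      finally show "partial i (D f) x = (\<Sum>\<alpha>\<in>idx_lists k. partial i (a \<alpha>) x * pderivs \<alpha> f x) +
                         (\<Sum>\<alpha>\<in>idx_lists k. a \<alpha> x * pderivs (i # \<alpha>) f x)"
        by (simp add: sum.distrib)
    qed
  qed
qed

lemma diff_op_pderivs_comp: "diff_op D \<Longrightarrow> diff_op (\<lambda>f. pderivs \<alpha> (D f))"
  by (induct \<alpha>) (auto intro: diff_op_partial)

lemma diff_op_comp:
  assumes "diff_op D1" "diff_op D2"
  shows "diff_op (\<lambda>f. D1 (D2 f))"
proof -
  obtain k a where a: "\<And>\<alpha>. smooth (a \<alpha>)"
    "\<And>f. smooth f \<Longrightarrow> D1 f = (\<lambda>x. \<Sum>\<alpha>\<in>idx_lists k. a \<alpha> x * pderivs \<alpha> f x)"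
    using assms(1) by (rule diff_opE) blast
  have "diff_op (\<lambda>f x. \<Sum>\<alpha>\<in>idx_lists k. a \<alpha> x * pderivs \<alpha> (D2 f) x)"
    by (intro diff_op_sum diff_op_mult diff_op_pderivs_comp assms a) simp
  then show ?thesis
    by (rule diff_op_cong) (simp add: a diff_op_smooth assms)
qed


lemma pderivs_lin:
  assumes "smooth f" "smooth g"
  shows "pderivs \<alpha> (\<lambda>x. a * f x + b * g x) = (\<lambda>x. a * pderivs \<alpha> f x + b * pderivs \<alpha> g x)"
  using assms by (simp add: pderivs_add pderivs_cmult smooth_cmult)

lemma diff_op_lin:
  assumes "diff_op D" "smooth f" "smooth g"
  shows "D (\<lambda>x. a * f x + b * g x) = (\<lambda>x. a * D f x + b * D g x)"
proof -
  obtain k c where c: "\<And>\<alpha>. smooth (c \<alpha>)"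
    "\<And>f. smooth f \<Longrightarrow> D f = (\<lambda>x. \<Sum>\<alpha>\<in>idx_lists k. c \<alpha> x * pderivs \<alpha> f x)"
    using assms(1) by (rule diff_opE) blast
  have s: "smooth (\<lambda>x. a * f x + b * g x)" using assms by (intro smooth_add smooth_cmult)
  show ?thesis
    by (simp add: c(2)[OF s] c(2)[OF assms(2)] c(2)[OF assms(3)] pderivs_lin assms
        sum_distrib_left sum.distrib algebra_simps)
qed

lemma diff_op_zero_arg:
  assumes "diff_op D" shows "D (\<lambda>x. 0) = (\<lambda>x. 0)"
proof -
  obtain k c where c: "\<And>\<alpha>. smooth (c \<alpha>)"
    "\<And>f. smooth f \<Longrightarrow> D f = (\<lambda>x. \<Sum>\<alpha>\<in>idx_lists k. c \<alpha> x * pderivs \<alpha> f x)"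
    using assms(1) by (rule diff_opE) blast
  show ?thesis by (simp add: c(2)[OF smooth_zero] pderivs_const)
qed

lemma diff_op_add_arg:
  assumes "diff_op D" "smooth f" "smooth g"
  shows "D (\<lambda>x. f x + g x) = (\<lambda>x. D f x + D g x)"
  using diff_op_lin[OF assms, of 1 1] by simp

lemma diff_op_cmult_arg:
  assumes "diff_op D" "smooth f"
  shows "D (\<lambda>x. a * f x) = (\<lambda>x. a * D f x)"
  using diff_op_lin[OF assms assms(2), of a 0] by simp

lemma diff_op_sum_arg:
  assumes "diff_op D" "finite A" "\<And>a. a \<in> A \<Longrightarrow> smooth (h a)"
  shows "D (\<lambda>x. \<Sum>a\<in>A. h a x) = (\<lambda>x. \<Sum>a\<in>A. D (h a) x)"
  using assms(2,3)
proof (induct A rule: finite_induct)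
  case empty
  then show ?case using diff_op_zero_arg[OF assms(1)] by simp
next
  case (insert a A)
  have "D (\<lambda>x. \<Sum>a\<in>insert a A. h a x) = D (\<lambda>x. h a x + (\<Sum>a\<in>A. h a x))"
    using insert by simp
  also have "\<dots> = (\<lambda>x. D (h a) x + D (\<lambda>x. \<Sum>a\<in>A. h a x) x)"
    using insert by (intro diff_op_add_arg assms(1) smooth_sum) auto
  finally show ?case using insert by simp
qed

lemma bidiff_op_lin1:
  assumes "bidiff_op B" "smooth f" "smooth f'" "smooth g"
  shows "B (\<lambda>x. a * f x + b * f' x) g = (\<lambda>x. a * B f g x + b * B f' g x)"
proof -
  obtain k c where c: "\<And>\<alpha> \<beta>. smooth (c \<alpha> \<beta>)"
    "\<And>f g. smooth f \<Longrightarrow> smooth g \<Longrightarrow>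
       B f g = (\<lambda>x. \<Sum>\<alpha>\<in>idx_lists k. \<Sum>\<beta>\<in>idx_lists k. c \<alpha> \<beta> x * pderivs \<alpha> f x * pderivs \<beta> g x)"
    using assms(1) by (rule bidiff_opE) blast
  have s: "smooth (\<lambda>x. a * f x + b * f' x)" using assms by (intro smooth_add smooth_cmult)
  show ?thesis
    by (simp add: c(2)[OF s assms(4)] c(2)[OF assms(2,4)] c(2)[OF assms(3,4)] pderivs_lin assms
        sum_distrib_left sum.distrib algebra_simps)
qed

lemma bidiff_op_lin2:
  assumes "bidiff_op B" "smooth f" "smooth g" "smooth g'"
  shows "B f (\<lambda>x. a * g x + b * g' x) = (\<lambda>x. a * B f g x + b * B f g' x)"
proof -
  obtain k c where c: "\<And>\<alpha> \<beta>. smooth (c \<alpha> \<beta>)"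
    "\<And>f g. smooth f \<Longrightarrow> smooth g \<Longrightarrow>
       B f g = (\<lambda>x. \<Sum>\<alpha>\<in>idx_lists k. \<Sum>\<beta>\<in>idx_lists k. c \<alpha> \<beta> x * pderivs \<alpha> f x * pderivs \<beta> g x)"
    using assms(1) by (rule bidiff_opE) blast
  have s: "smooth (\<lambda>x. a * g x + b * g' x)" using assms by (intro smooth_add smooth_cmult)
  show ?thesis
    by (simp add: c(2)[OF assms(2) s] c(2)[OF assms(2,3)] c(2)[OF assms(2,4)] pderivs_lin assms
        sum_distrib_left sum.distrib algebra_simps)
qed

lemma bidiff_op_zero1:
  assumes "bidiff_op B" "smooth g" shows "B (\<lambda>x. 0) g = (\<lambda>x. 0)"
proof -
  obtain k c where c: "\<And>\<alpha> \<beta>. smooth (c \<alpha> \<beta>)"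
    "\<And>f g. smooth f \<Longrightarrow> smooth g \<Longrightarrow>
       B f g = (\<lambda>x. \<Sum>\<alpha>\<in>idx_lists k. \<Sum>\<beta>\<in>idx_lists k. c \<alpha> \<beta> x * pderivs \<alpha> f x * pderivs \<beta> g x)"
    using assms(1) by (rule bidiff_opE) blast
  show ?thesis by (simp add: c(2)[OF smooth_zero assms(2)] pderivs_const)
qed

lemma bidiff_op_zero2:
  assumes "bidiff_op B" "smooth f" shows "B f (\<lambda>x. 0) = (\<lambda>x. 0)"
proof -
  obtain k c where c: "\<And>\<alpha> \<beta>. smooth (c \<alpha> \<beta>)"
    "\<And>f g. smooth f \<Longrightarrow> smooth g \<Longrightarrow>
       B f g = (\<lambda>x. \<Sum>\<alpha>\<in>idx_lists k. \<Sum>\<beta>\<in>idx_lists k. c \<alpha> \<beta> x * pderivs \<alpha> f x * pderivs \<beta> g x)"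
    using assms(1) by (rule bidiff_opE) blast
  show ?thesis by (simp add: c(2)[OF assms(2) smooth_zero] pderivs_const)
qed

lemma bidiff_op_sum1:
  assumes "bidiff_op B" "finite A" "\<And>a. a \<in> A \<Longrightarrow> smooth (h a)" "smooth g"
  shows "B (\<lambda>x. \<Sum>a\<in>A. h a x) g = (\<lambda>x. \<Sum>a\<in>A. B (h a) g x)"
  using assms(2,3)
proof (induct A rule: finite_induct)
  case empty
  then show ?case using bidiff_op_zero1[OF assms(1,4)] by simp
next
  case (insert a A)
  have "B (\<lambda>x. \<Sum>a\<in>insert a A. h a x) g = B (\<lambda>x. 1 * h a x + 1 * (\<Sum>a\<in>A. h a x)) g"
    using insert by simp
  also have "\<dots> = (\<lambda>x. 1 * B (h a) g x + 1 * B (\<lambda>x. \<Sum>a\<in>A. h a x) g x)"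
    using insert by (intro bidiff_op_lin1 assms(1,4) smooth_sum) auto
  finally show ?case using insert by simp
qed

lemma bidiff_op_sum2:
  assumes "bidiff_op B" "finite A" "\<And>a. a \<in> A \<Longrightarrow> smooth (h a)" "smooth f"
  shows "B f (\<lambda>x. \<Sum>a\<in>A. h a x) = (\<lambda>x. \<Sum>a\<in>A. B f (h a) x)"
  using assms(2,3)
proof (induct A rule: finite_induct)
  case empty
  then show ?case using bidiff_op_zero2[OF assms(1,4)] by simp
next
  case (insert a A)
  have "B f (\<lambda>x. \<Sum>a\<in>insert a A. h a x) = B f (\<lambda>x. 1 * h a x + 1 * (\<Sum>a\<in>A. h a x))"
    using insert by simp
  also have "\<dots> = (\<lambda>x. 1 * B f (h a) x + 1 * B f (\<lambda>x. \<Sum>a\<in>A. h a x) x)"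
    using insert by (intro bidiff_op_lin2 assms(1,4) smooth_sum) auto
  finally show ?case using insert by simp
qed

lemma bidiff_op_prod:
  assumes "diff_op D1" "diff_op D2" "smooth h"
  shows "bidiff_op (\<lambda>f g x. h x * D1 f x * D2 g x)"
proof -
  obtain k1 a1 where a1: "\<And>\<alpha>. smooth (a1 \<alpha>)"
    "\<And>f. smooth f \<Longrightarrow> D1 f = (\<lambda>x. \<Sum>\<alpha>\<in>idx_lists k1. a1 \<alpha> x * pderivs \<alpha> f x)"
    using assms(1) by (rule diff_opE) blast
  obtain k2 a2 where a2: "\<And>\<alpha>. smooth (a2 \<alpha>)"
    "\<And>f. smooth f \<Longrightarrow> D2 f = (\<lambda>x. \<Sum>\<alpha>\<in>idx_lists k2. a2 \<alpha> x * pderivs \<alpha> f x)"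
    using assms(2) by (rule diff_opE) blast
  show ?thesis
  proof (rule bidiff_op_gen[of "idx_lists k1 \<times> idx_lists k2" "\<lambda>p x. h x * a1 (fst p) x * a2 (snd p) x"
        _ fst snd])
    fix f g :: "'a fn" assume "smooth f" "smooth g"
    then show "(\<lambda>x. h x * D1 f x * D2 g x) = (\<lambda>x. \<Sum>b\<in>idx_lists k1 \<times> idx_lists k2.
         h x * a1 (fst b) x * a2 (snd b) x * pderivs (fst b) f x * pderivs (snd b) g x)"
      by (simp add: a1 a2 sum_distrib_left sum_distrib_right sum.cartesian_product case_prod_beta algebra_simps)
  qed (auto intro!: smooth_mult assms a1 a2)
qed

lemma bidiff_op_zero: "bidiff_op (\<lambda>f g x. 0)"
  by (rule bidiff_op_gen[of "{}"]) auto

lemma bidiff_op_add: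
  assumes "bidiff_op D1" "bidiff_op D2"
  shows "bidiff_op (\<lambda>f g x. D1 f g x + D2 f g x)"
proof -
  obtain k1 a1 where a1: "\<And>\<alpha> \<beta>. smooth (a1 \<alpha> \<beta>)"
    "\<And>f g. smooth f \<Longrightarrow> smooth g \<Longrightarrow>
       D1 f g = (\<lambda>x. \<Sum>\<alpha>\<in>idx_lists k1. \<Sum>\<beta>\<in>idx_lists k1. a1 \<alpha> \<beta> x * pderivs \<alpha> f x * pderivs \<beta> g x)"
    using assms(1) by (rule bidiff_opE) blast
  obtain k2 a2 where a2: "\<And>\<alpha> \<beta>. smooth (a2 \<alpha> \<beta>)"
    "\<And>f g. smooth f \<Longrightarrow> smooth g \<Longrightarrow>
       D2 f g = (\<lambda>x. \<Sum>\<alpha>\<in>idx_lists k2. \<Sum>\<beta>\<in>idx_lists k2. a2 \<alpha> \<beta> x * pderivs \<alpha> f x * pderivs \<beta> g x)"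
    using assms(2) by (rule bidiff_opE) blast
  let ?I1 = "idx_lists k1 \<times> idx_lists k1" and ?I2 = "idx_lists k2 \<times> idx_lists k2"
  have e: "(\<Sum>b\<in>Inl ` ?I1 \<union> Inr ` ?I2. F b) =
     (\<Sum>p\<in>?I1. F (Inl p)) + (\<Sum>p\<in>?I2. F (Inr p))" for F :: "_ \<Rightarrow> real"
    by (subst sum.union_disjoint) (auto simp: sum.reindex)
  show ?thesis
  proof (rule bidiff_op_gen[of "Inl ` ?I1 \<union> Inr ` ?I2"
          "case_sum (\<lambda>p. a1 (fst p) (snd p)) (\<lambda>p. a2 (fst p) (snd p))" _
          "case_sum fst fst" "case_sum snd snd"])
    fix f g :: "'a fn" assume "smooth f" "smooth g"
    then show "(\<lambda>x. D1 f g x + D2 f g x) = (\<lambda>x. \<Sum>b\<in>Inl ` ?I1 \<union> Inr ` ?I2.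
       case_sum (\<lambda>p. a1 (fst p) (snd p)) (\<lambda>p. a2 (fst p) (snd p)) b x *
       pderivs (case_sum fst fst b) f x * pderivs (case_sum snd snd b) g x)"
      by (simp only: e) (simp add: a1 a2 sum.cartesian_product case_prod_beta)
  qed (auto intro: a1 a2)
qed

lemma bidiff_op_sum:
  "finite A \<Longrightarrow> (\<And>a. a \<in> A \<Longrightarrow> bidiff_op (D a)) \<Longrightarrow> bidiff_op (\<lambda>f g x. \<Sum>a\<in>A. D a f g x)"
proof (induct A rule: finite_induct)
  case empty
  then show ?case using bidiff_op_zero by simp
next
  case (insert a A)
  then show ?case using bidiff_op_add[of "D a" "\<lambda>f g x. \<Sum>a\<in>A. D a f g x"] by simp
qed

lemma bidiff_op_mult:
  assumes "bidiff_op D" "smooth h"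
  shows "bidiff_op (\<lambda>f g x. h x * D f g x)"
proof -
  obtain k a where a: "\<And>\<alpha> \<beta>. smooth (a \<alpha> \<beta>)"
    "\<And>f g. smooth f \<Longrightarrow> smooth g \<Longrightarrow>
       D f g = (\<lambda>x. \<Sum>\<alpha>\<in>idx_lists k. \<Sum>\<beta>\<in>idx_lists k. a \<alpha> \<beta> x * pderivs \<alpha> f x * pderivs \<beta> g x)"
    using assms(1) by (rule bidiff_opE) blast
  show ?thesis
  proof (rule bidiff_op_gen[of "idx_lists k \<times> idx_lists k" "\<lambda>p x. h x * a (fst p) (snd p) x" _ fst snd])
    fix f g :: "'a fn" assume "smooth f" "smooth g"
    then show "(\<lambda>x. h x * D f g x) = (\<lambda>x. \<Sum>b\<in>idx_lists k \<times> idx_lists k.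
         h x * a (fst b) (snd b) x * pderivs (fst b) f x * pderivs (snd b) g x)"
      by (simp add: a sum_distrib_left sum.cartesian_product case_prod_beta algebra_simps)
  qed (auto intro!: smooth_mult assms a)
qed

lemma bidiff_op_partial:
  assumes "bidiff_op D"
  shows "bidiff_op (\<lambda>f g. partial i (D f g))"
proof -
  obtain k a where a: "\<And>\<alpha> \<beta>. smooth (a \<alpha> \<beta>)"
    "\<And>f g. smooth f \<Longrightarrow> smooth g \<Longrightarrow>
       D f g = (\<lambda>x. \<Sum>\<alpha>\<in>idx_lists k. \<Sum>\<beta>\<in>idx_lists k. a \<alpha> \<beta> x * pderivs \<alpha> f x * pderivs \<beta> g x)"
    using assms(1) by (rule bidiff_opE) blast
  let ?I = "idx_lists k \<times> idx_lists k"
  have "bidiff_op (\<lambda>f g x. (\<Sum>p\<in>?I. partial i (a (fst p) (snd p)) x * pderivs (fst p) f x * pderivs (snd p) g x)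
       + (\<Sum>p\<in>?I. a (fst p) (snd p) x * pderivs (i # fst p) f x * pderivs (snd p) g x)
       + (\<Sum>p\<in>?I. a (fst p) (snd p) x * pderivs (fst p) f x * pderivs (i # snd p) g x))"
    by (intro bidiff_op_add bidiff_op_gen[where B="?I", OF _ _ refl]) (auto intro: a smooth_partial)
  then show ?thesis
  proof (rule bidiff_op_cong)
    fix f g :: "'a fn" assume f: "smooth f" and g: "smooth g"
    show "partial i (D f g) = (\<lambda>x. (\<Sum>p\<in>?I. partial i (a (fst p) (snd p)) x * pderivs (fst p) f x * pderivs (snd p) g x)
       + (\<Sum>p\<in>?I. a (fst p) (snd p) x * pderivs (i # fst p) f x * pderivs (snd p) g x)
       + (\<Sum>p\<in>?I. a (fst p) (snd p) x * pderivs (fst p) f x * pderivs (i # snd p) g x))"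
    proof
      fix x
      have "D f g = (\<lambda>x. \<Sum>p\<in>?I. a (fst p) (snd p) x * pderivs (fst p) f x * pderivs (snd p) g x)"
        by (simp add: a f g sum.cartesian_product case_prod_beta)
      then have "partial i (D f g) x = (\<Sum>p\<in>?I. partial i (\<lambda>x. a (fst p) (snd p) x * pderivs (fst p) f x * pderivs (snd p) g x) x)"
        by (simp, intro partial_sum) (auto intro!: smooth_diff0 smooth_mult smooth_pderivs a f g)
      also have "\<dots> = (\<Sum>p\<in>?I. partial i (a (fst p) (snd p)) x * pderivs (fst p) f x * pderivs (snd p) g x
         + a (fst p) (snd p) x * pderivs (i # fst p) f x * pderivs (snd p) g x
         + a (fst p) (snd p) x * pderivs (fst p) f x * pderivs (i # snd p) g x)"
        by (intro sum.cong refl)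
           (simp add: partial_mult smooth_diff0 smooth_mult smooth_pderivs a f g algebra_simps)
      finally show "partial i (D f g) x = (\<Sum>p\<in>?I. partial i (a (fst p) (snd p)) x * pderivs (fst p) f x * pderivs (snd p) g x)
       + (\<Sum>p\<in>?I. a (fst p) (snd p) x * pderivs (i # fst p) f x * pderivs (snd p) g x)
       + (\<Sum>p\<in>?I. a (fst p) (snd p) x * pderivs (fst p) f x * pderivs (i # snd p) g x)"
        by (simp add: sum.distrib)
    qed
  qed
qed

lemma bidiff_op_pderivs_comp: "bidiff_op D \<Longrightarrow> bidiff_op (\<lambda>f g. pderivs \<alpha> (D f g))"
  by (induct \<alpha>) (auto intro: bidiff_op_partial)

lemma diff_bidiff_comp:
  assumes "diff_op D" "bidiff_op B"
  shows "bidiff_op (\<lambda>f g. D (B f g))"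
proof -
  obtain k a where a: "\<And>\<alpha>. smooth (a \<alpha>)"
    "\<And>f. smooth f \<Longrightarrow> D f = (\<lambda>x. \<Sum>\<alpha>\<in>idx_lists k. a \<alpha> x * pderivs \<alpha> f x)"
    using assms(1) by (rule diff_opE) blast
  have "bidiff_op (\<lambda>f g x. \<Sum>\<alpha>\<in>idx_lists k. a \<alpha> x * pderivs \<alpha> (B f g) x)"
    by (intro bidiff_op_sum bidiff_op_mult bidiff_op_pderivs_comp assms a) simp
  then show ?thesis
    by (rule bidiff_op_cong) (simp add: a bidiff_op_smooth assms)
qed

lemma bidiff_diff_comp:
  assumes "bidiff_op B" "diff_op D1" "diff_op D2"
  shows "bidiff_op (\<lambda>f g. B (D1 f) (D2 g))"
proof -
  obtain k a where a: "\<And>\<alpha> \<beta>. smooth (a \<alpha> \<beta>)"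
    "\<And>f g. smooth f \<Longrightarrow> smooth g \<Longrightarrow>
       B f g = (\<lambda>x. \<Sum>\<alpha>\<in>idx_lists k. \<Sum>\<beta>\<in>idx_lists k. a \<alpha> \<beta> x * pderivs \<alpha> f x * pderivs \<beta> g x)"
    using assms(1) by (rule bidiff_opE) blast
  have "bidiff_op (\<lambda>f g x. \<Sum>\<alpha>\<in>idx_lists k. \<Sum>\<beta>\<in>idx_lists k. a \<alpha> \<beta> x * pderivs \<alpha> (D1 f) x * pderivs \<beta> (D2 g) x)"
    by (intro bidiff_op_sum bidiff_op_prod diff_op_pderivs_comp assms a finite_idx_lists)
  then show ?thesis
    by (rule bidiff_op_cong) (simp add: a diff_op_smooth assms)
qed



type_synonym 'n ser = "nat \<Rightarrow> 'n fn"

definition ssmooth :: "'n::finite ser \<Rightarrow> bool" where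
  "ssmooth F \<longleftrightarrow> (\<forall>r. smooth (F r))"

definition sadd :: "'n ser \<Rightarrow> 'n ser \<Rightarrow> 'n ser" where
  "sadd F G = (\<lambda>r x. F r x + G r x)"

definition sh :: "'n ser \<Rightarrow> 'n ser" where
  "sh F = (\<lambda>r. if r = 0 then (\<lambda>x. 0) else F (r - 1))"

definition stl :: "'n ser \<Rightarrow> 'n ser" where
  "stl F = (\<lambda>r. F (Suc r))"

definition sop :: "(nat \<Rightarrow> 'n fn \<Rightarrow> 'n fn) \<Rightarrow> 'n ser \<Rightarrow> 'n ser" where
  "sop T F = (\<lambda>r x. \<Sum>s\<le>r. T s (F (r - s)) x)"

definition ocomp :: "(nat \<Rightarrow> 'n fn \<Rightarrow> 'n fn) \<Rightarrow> (nat \<Rightarrow> 'n fn \<Rightarrow> 'n fn) \<Rightarrow> nat \<Rightarrow> 'n fn \<Rightarrow> 'n fn" where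
  "ocomp A B = (\<lambda>r f x. \<Sum>s\<le>r. A s (B (r - s) f) x)"

definition dfam :: "(nat \<Rightarrow> 'n::finite fn \<Rightarrow> 'n fn) \<Rightarrow> bool" where
  "dfam T \<longleftrightarrow> (\<forall>r. diff_op (T r))"

definition bfam :: "(nat \<Rightarrow> 'n::finite fn \<Rightarrow> 'n fn \<Rightarrow> 'n fn) \<Rightarrow> bool" where
  "bfam B \<longleftrightarrow> (\<forall>r. bidiff_op (B r))"

lemma ssmooth_const: "smooth f \<Longrightarrow> ssmooth (const_ser f)"
  by (simp add: ssmooth_def const_ser_def smooth_zero)

lemma ssmooth_sadd: "ssmooth F \<Longrightarrow> ssmooth G \<Longrightarrow> ssmooth (sadd F G)"
  by (simp add: ssmooth_def sadd_def smooth_add)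

lemma ssmooth_sh: "ssmooth F \<Longrightarrow> ssmooth (sh F)"
  by (simp add: ssmooth_def sh_def smooth_zero)

lemma ssmooth_stl: "ssmooth F \<Longrightarrow> ssmooth (stl F)"
  by (simp add: ssmooth_def stl_def)

lemma ser_decomp: "F = sadd (const_ser (F 0)) (sh (stl F))"
  by (auto simp: sadd_def const_ser_def sh_def stl_def fun_eq_iff)

lemma ser_unique:
  assumes add1: "\<And>F F'. ssmooth F \<Longrightarrow> ssmooth F' \<Longrightarrow> \<Psi>1 (sadd F F') = sadd (\<Psi>1 F) (\<Psi>1 F')"
    and sh1: "\<And>F. ssmooth F \<Longrightarrow> \<Psi>1 (sh F) = sh (\<Psi>1 F)"
    and add2: "\<And>F F'. ssmooth F \<Longrightarrow> ssmooth F' \<Longrightarrow> \<Psi>2 (sadd F F') = sadd (\<Psi>2 F) (\<Psi>2 F')"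
    and sh2: "\<And>F. ssmooth F \<Longrightarrow> \<Psi>2 (sh F) = sh (\<Psi>2 F)"
    and c: "\<And>f. smooth f \<Longrightarrow> \<Psi>1 (const_ser f) = \<Psi>2 (const_ser f)"
    and F: "ssmooth F"
  shows "\<Psi>1 F = \<Psi>2 F"
proof -
  have "\<forall>F. ssmooth F \<longrightarrow> \<Psi>1 F r = \<Psi>2 F r" for r
  proof (induct r rule: less_induct)
    case (less r)
    show ?case
    proof (intro allI impI)
      fix F :: "'a ser" assume F: "ssmooth F"
      have s0: "smooth (F 0)" using F by (simp add: ssmooth_def)
      have e: "\<Psi> F = sadd (\<Psi> (const_ser (F 0))) (sh (\<Psi> (stl F)))"
        if "\<And>F F'. ssmooth F \<Longrightarrow> ssmooth F' \<Longrightarrow> \<Psi> (sadd F F') = sadd (\<Psi> F) (\<Psi> F')"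
           "\<And>F. ssmooth F \<Longrightarrow> \<Psi> (sh F) = sh (\<Psi> F)" for \<Psi>
      proof -
        have "\<Psi> F = \<Psi> (sadd (const_ser (F 0)) (sh (stl F)))" by (subst ser_decomp) simp
        also have "\<dots> = sadd (\<Psi> (const_ser (F 0))) (\<Psi> (sh (stl F)))"
          by (intro that ssmooth_const ssmooth_sh ssmooth_stl s0 F)
        also have "\<dots> = sadd (\<Psi> (const_ser (F 0))) (sh (\<Psi> (stl F)))"
          by (simp add: that ssmooth_stl F)
        finally show ?thesis .
      qed
      have "\<Psi>1 F r = sadd (\<Psi>1 (const_ser (F 0))) (sh (\<Psi>1 (stl F))) r" using e[OF add1 sh1] by simp
      also have "\<dots> = sadd (\<Psi>2 (const_ser (F 0))) (sh (\<Psi>2 (stl F))) r"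
        using less ssmooth_stl[OF F] c[OF s0] by (auto simp: sadd_def sh_def)
      also have "\<dots> = \<Psi>2 F r" using e[OF add2 sh2] by simp
      finally show "\<Psi>1 F r = \<Psi>2 F r" .
    qed
  qed
  then show ?thesis using F by auto
qed

subsection \<open>Operator families on series\<close>

lemma sop_smooth: "dfam T \<Longrightarrow> ssmooth F \<Longrightarrow> ssmooth (sop T F)"
  unfolding ssmooth_def sop_def dfam_def
  by (intro allI smooth_sum finite_atMost) (simp add: diff_op_smooth)

lemma sop_sadd:
  assumes "dfam T" "ssmooth F" "ssmooth G"
  shows "sop T (sadd F G) = sadd (sop T F) (sop T G)"
  using assms unfolding ssmooth_def sop_def dfam_def sadd_def
  by (simp add: fun_eq_iff diff_op_add_arg sum.distrib)

lemma sop_sh: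
  assumes "dfam T"
  shows "sop T (sh F) = sh (sop T F)"
proof (rule ext)
  fix r
  show "sop T (sh F) r = sh (sop T F) r"
  proof (cases r)
    case 0
    then show ?thesis using assms by (simp add: sop_def sh_def dfam_def diff_op_zero_arg)
  next
    case (Suc m)
    have "sop T (sh F) r = (\<lambda>x. (\<Sum>s\<le>m. T s (sh F (Suc m - s)) x) + T (Suc m) (sh F 0) x)"
      unfolding sop_def Suc by simp
    also have "\<dots> = (\<lambda>x. \<Sum>s\<le>m. T s (F (m - s)) x)"
      using assms by (simp add: sh_def dfam_def diff_op_zero_arg Suc_diff_le)
    finally show ?thesis by (simp add: sh_def sop_def Suc)
  qed
qed

lemma sop_const:
  assumes "dfam T"
  shows "sop T (const_ser f) r = T r f"
proof -
  have "sop T (const_ser f) r = (\<lambda>x. \<Sum>s\<le>r. (if s = r then T r f x else 0))"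
    unfolding sop_def const_ser_def
    using assms by (intro ext sum.cong) (auto simp: dfam_def diff_op_zero_arg)
  then show ?thesis by simp
qed

lemma dfam_ocomp: "dfam A \<Longrightarrow> dfam B \<Longrightarrow> dfam (ocomp A B)"
  unfolding dfam_def ocomp_def
  by (intro allI diff_op_sum finite_atMost) (simp add: diff_op_comp)

lemma sop_comp:
  assumes A: "dfam A" and B: "dfam B" and F: "ssmooth F"
  shows "sop A (sop B F) = sop (ocomp A B) F"
proof (rule ser_unique[of "\<lambda>F. sop A (sop B F)" "sop (ocomp A B)"])
  fix F F' :: "'a ser" assume "ssmooth F" "ssmooth F'"
  then show "sop A (sop B (sadd F F')) = sadd (sop A (sop B F)) (sop A (sop B F'))"
    by (simp add: sop_sadd A B sop_smooth)
  show "sop (ocomp A B) (sadd F F') = sadd (sop (ocomp A B) F) (sop (ocomp A B) F')"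
    using \<open>ssmooth F\<close> \<open>ssmooth F'\<close> by (simp add: sop_sadd dfam_ocomp A B)
next
  fix F :: "'a ser"
  show "sop A (sop B (sh F)) = sh (sop A (sop B F))" by (simp add: sop_sh A B)
  show "sop (ocomp A B) (sh F) = sh (sop (ocomp A B) F)" by (simp add: sop_sh A B dfam_ocomp)
next
  fix f :: "'a fn" assume f: "smooth f"
  show "sop A (sop B (const_ser f)) = sop (ocomp A B) (const_ser f)"
  proof (rule ext)
    fix r
    have "sop A (sop B (const_ser f)) r = (\<lambda>x. \<Sum>s\<le>r. A s (B (r - s) f) x)"
      unfolding sop_def[of A] using B by (simp add: sop_const)
    also have "\<dots> = sop (ocomp A B) (const_ser f) r"
      by (simp add: sop_const dfam_ocomp A B) (simp add: ocomp_def)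
    finally show "sop A (sop B (const_ser f)) r = sop (ocomp A B) (const_ser f) r" .
  qed
qed (rule F)


subsection \<open>Star products of series\<close>

lemma ss_smooth:
  assumes "bfam B" "ssmooth F" "ssmooth G"
  shows "ssmooth (ser_star B F G)"
  using assms unfolding ssmooth_def ser_star_def bfam_def
  by (intro allI smooth_sum finite_atMost) (simp add: bidiff_op_smooth)

lemma ss_sadd1:
  assumes "bfam B" "ssmooth F" "ssmooth F'" "ssmooth G"
  shows "ser_star B (sadd F F') G = sadd (ser_star B F G) (ser_star B F' G)"
proof -
  have "B s (\<lambda>x. F t x + F' t x) (G u) = (\<lambda>x. B s (F t) (G u) x + B s (F' t) (G u) x)" for s t u
    using bidiff_op_lin1[of "B s" "F t" "F' t" "G u" 1 1] assms by (simp add: bfam_def ssmooth_def)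
  then show ?thesis unfolding ser_star_def sadd_def by (simp add: sum.distrib)
qed

lemma ss_sadd2:
  assumes "bfam B" "ssmooth F" "ssmooth G" "ssmooth G'"
  shows "ser_star B F (sadd G G') = sadd (ser_star B F G) (ser_star B F G')"
proof -
  have "B s (F t) (\<lambda>x. G u x + G' u x) = (\<lambda>x. B s (F t) (G u) x + B s (F t) (G' u) x)" for s t u
    using bidiff_op_lin2[of "B s" "F t" "G u" "G' u" 1 1] assms by (simp add: bfam_def ssmooth_def)
  then show ?thesis unfolding ser_star_def sadd_def by (simp add: sum.distrib)
qed

lemma ss_sh1:
  assumes "bfam B" "ssmooth G"
  shows "ser_star B (sh F) G = sh (ser_star B F G)"
proof (rule ext)
  fix r
  have z: "B s (\<lambda>x. 0) (G u) = (\<lambda>x. 0)" for s u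
    using assms by (simp add: bidiff_op_zero1 bfam_def ssmooth_def)
  show "ser_star B (sh F) G r = sh (ser_star B F G) r"
  proof (cases r)
    case 0
    then show ?thesis by (simp add: ser_star_def sh_def z)
  next
    case (Suc m)
    have i: "(\<Sum>t\<le>Suc m - s. B s (sh F t) (G (Suc m - s - t)) x) = (\<Sum>t\<le>m - s. B s (F t) (G (m - s - t)) x)"
      if "s \<le> m" for s x
    proof -
      have "Suc m - s = Suc (m - s)" using that by simp
      then have "(\<Sum>t\<le>Suc m - s. B s (sh F t) (G (Suc m - s - t)) x) =
          (\<Sum>t\<le>Suc (m - s). B s (sh F t) (G (Suc (m - s) - t)) x)" by simp
      also have "\<dots> = B s (sh F 0) (G (Suc (m - s))) x + (\<Sum>t\<le>m - s. B s (sh F (Suc t)) (G (Suc (m - s) - Suc t)) x)"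
        by (simp only: sum.atMost_Suc_shift minus_nat.diff_0)
      also have "\<dots> = (\<Sum>t\<le>m - s. B s (F t) (G (m - s - t)) x)"
        by (simp add: sh_def z)
      finally show ?thesis .
    qed
    have "ser_star B (sh F) G r = (\<lambda>x. (\<Sum>s\<le>m. \<Sum>t\<le>Suc m - s. B s (sh F t) (G (Suc m - s - t)) x)
         + (\<Sum>t\<le>0. B (Suc m) (sh F t) (G (Suc m - Suc m - t)) x))"
      unfolding ser_star_def Suc by simp
    also have "\<dots> = (\<lambda>x. \<Sum>s\<le>m. \<Sum>t\<le>m - s. B s (F t) (G (m - s - t)) x)"
    proof (rule ext)
      fix x
      have "(\<Sum>s\<le>m. \<Sum>t\<le>Suc m - s. B s (sh F t) (G (Suc m - s - t)) x) =
            (\<Sum>s\<le>m. \<Sum>t\<le>m - s. B s (F t) (G (m - s - t)) x)"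
        by (rule sum.cong[OF refl], rule i, simp)
      then show "(\<Sum>s\<le>m. \<Sum>t\<le>Suc m - s. B s (sh F t) (G (Suc m - s - t)) x)
         + (\<Sum>t\<le>0. B (Suc m) (sh F t) (G (Suc m - Suc m - t)) x) =
            (\<Sum>s\<le>m. \<Sum>t\<le>m - s. B s (F t) (G (m - s - t)) x)"
        by (simp add: sh_def z)
    qed
    finally show ?thesis by (simp add: sh_def ser_star_def Suc)
  qed
qed

lemma ss_sh2:
  assumes "bfam B" "ssmooth F"
  shows "ser_star B F (sh G) = sh (ser_star B F G)"
proof (rule ext)
  fix r
  have z: "B s (F u) (\<lambda>x. 0) = (\<lambda>x. 0)" for s u
    using assms by (simp add: bidiff_op_zero2 bfam_def ssmooth_def)
  show "ser_star B F (sh G) r = sh (ser_star B F G) r"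
  proof (cases r)
    case 0
    then show ?thesis by (simp add: ser_star_def sh_def z)
  next
    case (Suc m)
    have i: "(\<Sum>t\<le>Suc m - s. B s (F t) (sh G (Suc m - s - t)) x) = (\<Sum>t\<le>m - s. B s (F t) (G (m - s - t)) x)"
      if "s \<le> m" for s x
    proof -
      have "Suc m - s = Suc (m - s)" using that by simp
      then have "(\<Sum>t\<le>Suc m - s. B s (F t) (sh G (Suc m - s - t)) x) =
          (\<Sum>t\<le>Suc (m - s). B s (F t) (sh G (Suc (m - s) - t)) x)" by simp
      also have "\<dots> = (\<Sum>t\<le>m - s. B s (F t) (sh G (Suc (m - s) - t)) x) + B s (F (Suc (m - s))) (sh G 0) x"
        by simp
      also have "\<dots> = (\<Sum>t\<le>m - s. B s (F t) (G (m - s - t)) x)"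
        by (auto simp: sh_def z Suc_diff_le intro!: sum.cong)
      finally show ?thesis .
    qed
    have "ser_star B F (sh G) r = (\<lambda>x. (\<Sum>s\<le>m. \<Sum>t\<le>Suc m - s. B s (F t) (sh G (Suc m - s - t)) x)
         + (\<Sum>t\<le>0. B (Suc m) (F t) (sh G (Suc m - Suc m - t)) x))"
      unfolding ser_star_def Suc by simp
    also have "\<dots> = (\<lambda>x. \<Sum>s\<le>m. \<Sum>t\<le>m - s. B s (F t) (G (m - s - t)) x)"
    proof (rule ext)
      fix x
      have "(\<Sum>s\<le>m. \<Sum>t\<le>Suc m - s. B s (F t) (sh G (Suc m - s - t)) x) =
            (\<Sum>s\<le>m. \<Sum>t\<le>m - s. B s (F t) (G (m - s - t)) x)"
        by (rule sum.cong[OF refl], rule i, simp)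
      then show "(\<Sum>s\<le>m. \<Sum>t\<le>Suc m - s. B s (F t) (sh G (Suc m - s - t)) x)
         + (\<Sum>t\<le>0. B (Suc m) (F t) (sh G (Suc m - Suc m - t)) x) =
            (\<Sum>s\<le>m. \<Sum>t\<le>m - s. B s (F t) (G (m - s - t)) x)"
        by (simp add: sh_def z)
    qed
    finally show ?thesis by (simp add: sh_def ser_star_def Suc)
  qed
qed

lemma ss_const:
  assumes "bfam B" "smooth f" "smooth g"
  shows "ser_star B (const_ser f) (const_ser g) r = B r f g"
proof -
  have z1: "B s (\<lambda>x. 0) h = (\<lambda>x. 0)" if "smooth h" for s h
    using assms that by (simp add: bidiff_op_zero1 bfam_def)
  have z2: "B s f (\<lambda>x. 0) = (\<lambda>x. 0)" for s
    using assms by (simp add: bidiff_op_zero2 bfam_def)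
  have "ser_star B (const_ser f) (const_ser g) r =
      (\<lambda>x. \<Sum>s\<le>r. \<Sum>t\<le>r - s. (if s = r \<and> t = 0 then B r f g x else 0))"
    unfolding ser_star_def const_ser_def
    by (intro ext sum.cong refl) (auto simp: z1 z2 assms smooth_zero)
  also have "\<dots> = B r f g"
  proof (rule ext)
    fix x
    have "(\<Sum>t\<le>r - s. if s = r \<and> t = 0 then B r f g x else 0) = (if s = r then B r f g x else 0)" for s
      by (cases "s = r") auto
    then show "(\<Sum>s\<le>r. \<Sum>t\<le>r - s. if s = r \<and> t = 0 then B r f g x else 0) = B r f g x"
      by (simp add: sum.delta)
  qed
  finally show ?thesis .
qed


lemma ss_const1:
  assumes "bfam B" "smooth f" "ssmooth G"
  shows "ser_star B (const_ser f) G r = (\<lambda>x. \<Sum>s\<le>r. B s f (G (r - s)) x)"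
proof -
  have z1: "B s (\<lambda>x. 0) h = (\<lambda>x. 0)" if "smooth h" for s h
    using assms that by (simp add: bidiff_op_zero1 bfam_def)
  have "(\<Sum>t\<le>r - s. B s (const_ser f t) (G (r - s - t)) x) = B s f (G (r - s)) x" for s x
  proof -
    have "(\<Sum>t\<le>r - s. B s (const_ser f t) (G (r - s - t)) x) =
        (\<Sum>t\<le>r - s. if t = 0 then B s f (G (r - s)) x else 0)"
      using assms by (intro sum.cong refl) (auto simp: const_ser_def z1 ssmooth_def)
    then show ?thesis by (simp add: sum.delta)
  qed
  then show ?thesis unfolding ser_star_def by simp
qed

lemma ss_const2:
  assumes "bfam B" "ssmooth F" "smooth g"
  shows "ser_star B F (const_ser g) r = (\<lambda>x. \<Sum>s\<le>r. B s (F (r - s)) g x)"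
proof -
  have z2: "B s h (\<lambda>x. 0) = (\<lambda>x. 0)" if "smooth h" for s h
    using assms that by (simp add: bidiff_op_zero2 bfam_def)
  have "(\<Sum>t\<le>r - s. B s (F t) (const_ser g (r - s - t)) x) = B s (F (r - s)) g x" if "s \<le> r" for s x
  proof -
    have "(\<Sum>t\<le>r - s. B s (F t) (const_ser g (r - s - t)) x) =
        (\<Sum>t\<le>r - s. if t = r - s then B s (F (r - s)) g x else 0)"
      using assms by (intro sum.cong refl) (auto simp: const_ser_def z2 ssmooth_def)
    then show ?thesis by (simp add: sum.delta)
  qed
  then show ?thesis unfolding ser_star_def by (intro ext sum.cong) auto
qed


context
  fixes C :: "nat \<Rightarrow> 'n::finite fn \<Rightarrow> 'n fn \<Rightarrow> 'n fn"
  assumes C: "bfam C"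
    and as: "\<And>r f g h. smooth f \<Longrightarrow> smooth g \<Longrightarrow> smooth h \<Longrightarrow>
        (\<lambda>x. \<Sum>s\<le>r. C s (C (r - s) f g) h x) = (\<lambda>x. \<Sum>s\<le>r. C s f (C (r - s) g h) x)"
begin

lemma ss_assoc_ccc:
  assumes f: "smooth f" and g: "smooth g" and h: "smooth h"
  shows "ser_star C (ser_star C (const_ser f) (const_ser g)) (const_ser h) =
         ser_star C (const_ser f) (ser_star C (const_ser g) (const_ser h))"
proof (rule ext)
  fix r
  have "ser_star C (ser_star C (const_ser f) (const_ser g)) (const_ser h) r = (\<lambda>x. \<Sum>s\<le>r. C s (C (r - s) f g) h x)"
    by (subst ss_const2[OF C ss_smooth[OF C ssmooth_const[OF f] ssmooth_const[OF g]] h])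
       (simp add: ss_const C f g)
  also have "\<dots> = (\<lambda>x. \<Sum>s\<le>r. C s f (C (r - s) g h) x)" by (rule as[OF f g h])
  also have "\<dots> = ser_star C (const_ser f) (ser_star C (const_ser g) (const_ser h)) r"
    by (subst ss_const1[OF C f ss_smooth[OF C ssmooth_const[OF g] ssmooth_const[OF h]]])
       (simp add: ss_const C g h)
  finally show "ser_star C (ser_star C (const_ser f) (const_ser g)) (const_ser h) r =
         ser_star C (const_ser f) (ser_star C (const_ser g) (const_ser h)) r" .
qed

lemma ss_assoc_cc:
  assumes f: "smooth f" and g: "smooth g" and H: "ssmooth H"
  shows "ser_star C (ser_star C (const_ser f) (const_ser g)) H =
         ser_star C (const_ser f) (ser_star C (const_ser g) H)"
proof (rule ser_unique[of "\<lambda>H. ser_star C (ser_star C (const_ser f) (const_ser g)) H"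
      "\<lambda>H. ser_star C (const_ser f) (ser_star C (const_ser g) H)"])
  fix H H' :: "'n ser" assume "ssmooth H" "ssmooth H'"
  then show "ser_star C (ser_star C (const_ser f) (const_ser g)) (sadd H H') =
    sadd (ser_star C (ser_star C (const_ser f) (const_ser g)) H) (ser_star C (ser_star C (const_ser f) (const_ser g)) H')"
    "ser_star C (const_ser f) (ser_star C (const_ser g) (sadd H H')) =
    sadd (ser_star C (const_ser f) (ser_star C (const_ser g) H)) (ser_star C (const_ser f) (ser_star C (const_ser g) H'))"
    by (simp_all add: ss_sadd2 ss_smooth ssmooth_const C f g)
next
  fix H :: "'n ser"
  show "ser_star C (ser_star C (const_ser f) (const_ser g)) (sh H) = sh (ser_star C (ser_star C (const_ser f) (const_ser g)) H)"
    "ser_star C (const_ser f) (ser_star C (const_ser g) (sh H)) = sh (ser_star C (const_ser f) (ser_star C (const_ser g) H))"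
    by (simp_all add: ss_sh2 ss_smooth ssmooth_const C f g)
qed (auto simp: ss_assoc_ccc f g H)

lemma ss_assoc_c:
  assumes f: "smooth f" and G: "ssmooth G" and H: "ssmooth H"
  shows "ser_star C (ser_star C (const_ser f) G) H = ser_star C (const_ser f) (ser_star C G H)"
proof (rule ser_unique[of "\<lambda>G. ser_star C (ser_star C (const_ser f) G) H"
      "\<lambda>G. ser_star C (const_ser f) (ser_star C G H)"])
  fix G G' :: "'n ser" assume "ssmooth G" "ssmooth G'"
  then show "ser_star C (ser_star C (const_ser f) (sadd G G')) H =
    sadd (ser_star C (ser_star C (const_ser f) G) H) (ser_star C (ser_star C (const_ser f) G') H)"
    "ser_star C (const_ser f) (ser_star C (sadd G G') H) =
    sadd (ser_star C (const_ser f) (ser_star C G H)) (ser_star C (const_ser f) (ser_star C G' H))"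
    by (simp_all add: ss_sadd1 ss_sadd2 ss_smooth ssmooth_const C f H)
next
  fix G :: "'n ser"
  show "ser_star C (ser_star C (const_ser f) (sh G)) H = sh (ser_star C (ser_star C (const_ser f) G) H)"
    "ser_star C (const_ser f) (ser_star C (sh G) H) = sh (ser_star C (const_ser f) (ser_star C G H))"
    by (simp_all add: ss_sh1 ss_sh2 ss_smooth ssmooth_const C f H)
qed (auto simp: ss_assoc_cc f G H)

lemma ss_assoc:
  assumes F: "ssmooth F" and G: "ssmooth G" and H: "ssmooth H"
  shows "ser_star C (ser_star C F G) H = ser_star C F (ser_star C G H)"
proof (rule ser_unique[of "\<lambda>F. ser_star C (ser_star C F G) H"
      "\<lambda>F. ser_star C F (ser_star C G H)"])
  fix F F' :: "'n ser" assume "ssmooth F" "ssmooth F'"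
  then show "ser_star C (ser_star C (sadd F F') G) H =
    sadd (ser_star C (ser_star C F G) H) (ser_star C (ser_star C F' G) H)"
    "ser_star C (sadd F F') (ser_star C G H) =
    sadd (ser_star C F (ser_star C G H)) (ser_star C F' (ser_star C G H))"
    by (simp_all add: ss_sadd1 ss_smooth C G H)
next
  fix F :: "'n ser"
  show "ser_star C (ser_star C (sh F) G) H = sh (ser_star C (ser_star C F G) H)"
    "ser_star C (sh F) (ser_star C G H) = sh (ser_star C F (ser_star C G H))"
    by (simp_all add: ss_sh1 ss_smooth C G H)
qed (auto simp: ss_assoc_c F G H)

end



function Tinv :: "(nat \<Rightarrow> 'n::finite fn \<Rightarrow> 'n fn) \<Rightarrow> nat \<Rightarrow> 'n fn \<Rightarrow> 'n fn" where
  "Tinv R r = (if r = 0 then (\<lambda>f. f) else (\<lambda>f x. - (\<Sum>s<r. R (r - s) (Tinv R s f) x)))"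
  by auto
termination by (relation "Wellfounded.measure (\<lambda>(R, r). r)") auto

function Linv :: "(nat \<Rightarrow> 'n::finite fn \<Rightarrow> 'n fn) \<Rightarrow> nat \<Rightarrow> 'n fn \<Rightarrow> 'n fn" where
  "Linv R r = (if r = 0 then (\<lambda>f. f) else (\<lambda>f x. - (\<Sum>s<r. Linv R s (R (r - s) f) x)))"
  by auto
termination by (relation "Wellfounded.measure (\<lambda>(R, r). r)") auto

declare Tinv.simps[simp del] Linv.simps[simp del]

lemma Tinv_0 [simp]: "Tinv R 0 = (\<lambda>f. f)" by (simp add: Tinv.simps)
lemma Linv_0 [simp]: "Linv R 0 = (\<lambda>f. f)" by (simp add: Linv.simps)
lemma Tinv_pos: "r > 0 \<Longrightarrow> Tinv R r = (\<lambda>f x. - (\<Sum>s<r. R (r - s) (Tinv R s f) x))"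
  by (subst Tinv.simps) simp
lemma Linv_pos: "r > 0 \<Longrightarrow> Linv R r = (\<lambda>f x. - (\<Sum>s<r. Linv R s (R (r - s) f) x))"
  by (subst Linv.simps) simp

lemma dfam_Tinv:
  assumes "dfam R" shows "dfam (Tinv R)"
proof -
  have "diff_op (Tinv R r)" for r
  proof (induct r rule: less_induct)
    case (less r)
    show ?case
    proof (cases "r = 0")
      case True
      then show ?thesis by (simp add: diff_op_id)
    next
      case False
      have "diff_op (\<lambda>f x. (\<lambda>x. -1) x * (\<Sum>s<r. R (r - s) (Tinv R s f) x))"
        using less assms
        by (intro diff_op_mult diff_op_sum finite_lessThan smooth_const)
           (simp add: diff_op_comp dfam_def)
      then show ?thesis by (rule diff_op_cong) (use False in \<open>simp add: Tinv_pos\<close>)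
    qed
  qed
  then show ?thesis by (simp add: dfam_def)
qed

lemma dfam_Linv:
  assumes "dfam R" shows "dfam (Linv R)"
proof -
  have "diff_op (Linv R r)" for r
  proof (induct r rule: less_induct)
    case (less r)
    show ?case
    proof (cases "r = 0")
      case True
      then show ?thesis by (simp add: diff_op_id)
    next
      case False
      have "diff_op (\<lambda>f x. (\<lambda>x. -1) x * (\<Sum>s<r. Linv R s (R (r - s) f) x))"
        using less assms
        by (intro diff_op_mult diff_op_sum finite_lessThan smooth_const)
           (simp add: diff_op_comp dfam_def)
      then show ?thesis by (rule diff_op_cong) (use False in \<open>simp add: Linv_pos\<close>)
    qed
  qed
  then show ?thesis by (simp add: dfam_def)
qed

lemma sop_cong:
  assumes "\<And>r f. smooth f \<Longrightarrow> A r f = B r f" "ssmooth F"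
  shows "sop A F = sop B F"
  using assms unfolding sop_def ssmooth_def by simp

lemma sop_id: "sop (\<lambda>r f. const_ser f r) F = F"
proof (rule ext)+
  fix r x
  have "(\<Sum>s\<le>r. const_ser (F (r - s)) s x) = (\<Sum>s\<le>r. if s = 0 then F r x else 0)"
    by (intro sum.cong) (auto simp: const_ser_def)
  then show "sop (\<lambda>r f. const_ser f r) F r x = F r x" by (simp add: sop_def sum.delta)
qed

lemma ocomp_R_Tinv:
  assumes R0: "R 0 = (\<lambda>f. f)"
  shows "ocomp R (Tinv R) r f = const_ser f r"
proof (cases r)
  case 0
  then show ?thesis by (simp add: ocomp_def R0 const_ser_def)
next
  case (Suc m)
  have "ocomp R (Tinv R) r f = (\<lambda>x. Tinv R (Suc m) f x + (\<Sum>s\<le>m. R (Suc s) (Tinv R (m - s) f) x))"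
    unfolding ocomp_def Suc by (simp only: sum.atMost_Suc_shift) (simp add: R0)
  also have "\<dots> = (\<lambda>x. 0)"
  proof (rule ext)
    fix x
    have "(\<Sum>s<Suc m. R (Suc m - s) (Tinv R s f) x) = (\<Sum>i<Suc m. R (Suc m - (Suc m - Suc i)) (Tinv R (Suc m - Suc i) f) x)"
      by (rule sum.nat_diff_reindex[symmetric])
    also have "\<dots> = (\<Sum>s\<le>m. R (Suc s) (Tinv R (m - s) f) x)"
      by (simp add: lessThan_Suc_atMost Suc_diff_le)
    finally show "Tinv R (Suc m) f x + (\<Sum>s\<le>m. R (Suc s) (Tinv R (m - s) f) x) = 0"
      by (simp add: Tinv_pos)
  qed
  finally show ?thesis by (simp add: Suc const_ser_def)
qed

lemma ocomp_Linv_R: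
  assumes R0: "R 0 = (\<lambda>f. f)"
  shows "ocomp (Linv R) R r f = const_ser f r"
proof (cases r)
  case 0
  then show ?thesis by (simp add: ocomp_def R0 const_ser_def)
next
  case (Suc m)
  have "ocomp (Linv R) R r f = (\<lambda>x. (\<Sum>s<Suc m. Linv R s (R (Suc m - s) f) x) + Linv R (Suc m) f x)"
    unfolding ocomp_def Suc by (simp add: R0 lessThan_Suc_atMost[symmetric])
  also have "\<dots> = (\<lambda>x. 0)"
    by (simp add: Linv_pos)
  finally show ?thesis by (simp add: Suc const_ser_def)
qed

lemma inverse_laws:
  assumes dR: "dfam R" and R0: "R 0 = (\<lambda>f. f)" and F: "ssmooth F"
  shows "sop R (sop (Tinv R) F) = F" and "sop (Tinv R) (sop R F) = F"
proof -
  have e1: "ocomp R (Tinv R) = (\<lambda>r f. const_ser f r)" using ocomp_R_Tinv[of R, OF R0] by (intro ext) simp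
  have e2: "ocomp (Linv R) R = (\<lambda>r f. const_ser f r)" using ocomp_Linv_R[of R, OF R0] by (intro ext) simp
  have RT: "sop R (sop (Tinv R) G) = G" if "ssmooth G" for G
    using that by (simp add: sop_comp dR dfam_Tinv e1 sop_id)
  have LR: "sop (Linv R) (sop R G) = G" if "ssmooth G" for G
    using that by (simp add: sop_comp dR dfam_Linv e2 sop_id)
  show "sop R (sop (Tinv R) F) = F" by (rule RT[OF F])
  have s: "ssmooth (sop (Tinv R) (sop R F))" by (intro sop_smooth dfam_Tinv dR F)
  have "sop (Tinv R) (sop R F) = sop (Linv R) (sop R (sop (Tinv R) (sop R F)))"
    by (rule LR[OF s, symmetric])
  also have "\<dots> = sop (Linv R) (sop R F)" by (simp add: RT sop_smooth dR F)
  also have "\<dots> = F" by (rule LR[OF F])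
  finally show "sop (Tinv R) (sop R F) = F" .
qed



definition mono :: "'n::finite list \<Rightarrow> 'n fn" where
  "mono is = (\<lambda>x. \<Prod>j<length is. x $ (is ! j))"

definition sscale :: "real \<Rightarrow> 'n ser \<Rightarrow> 'n ser" where
  "sscale c F = (\<lambda>r x. c * F r x)"

lemma sop_sscale:
  assumes "dfam T" "ssmooth F"
  shows "sop T (sscale c F) = sscale c (sop T F)"
  using assms unfolding sop_def sscale_def dfam_def ssmooth_def
  by (simp add: diff_op_cmult_arg sum_distrib_left)

lemma star_product_facts:
  assumes "star_product P C"
  shows "bfam C"
    and "\<And>f g. smooth f \<Longrightarrow> smooth g \<Longrightarrow> C 0 f g = (\<lambda>x. f x * g x)"
    and "\<And>r c f. r \<ge> 1 \<Longrightarrow> smooth f \<Longrightarrow> C r (\<lambda>x. c) f = (\<lambda>x. 0)"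
    and "\<And>r c f. r \<ge> 1 \<Longrightarrow> smooth f \<Longrightarrow> C r f (\<lambda>x. c) = (\<lambda>x. 0)"
    and "\<And>r f g h. smooth f \<Longrightarrow> smooth g \<Longrightarrow> smooth h \<Longrightarrow>
        (\<lambda>x. \<Sum>s\<le>r. C s (C (r - s) f g) h x) = (\<lambda>x. \<Sum>s\<le>r. C s f (C (r - s) g h) x)"
    and "\<And>f g. smooth f \<Longrightarrow> smooth g \<Longrightarrow> (\<lambda>x. C 1 f g x - C 1 g f x) = (\<lambda>x. 2 * P f g x)"
proof -
  note h = assms[unfolded star_product_def bfam_def]
  show "bfam C" using h by (simp add: bfam_def)
  show "\<And>f g. smooth f \<Longrightarrow> smooth g \<Longrightarrow> C 0 f g = (\<lambda>x. f x * g x)" using h by simp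
  show "\<And>r c f. r \<ge> 1 \<Longrightarrow> smooth f \<Longrightarrow> C r (\<lambda>x. c) f = (\<lambda>x. 0)" using h by simp
  show "\<And>r c f. r \<ge> 1 \<Longrightarrow> smooth f \<Longrightarrow> C r f (\<lambda>x. c) = (\<lambda>x. 0)" using h by simp
  show "\<And>r f g h. smooth f \<Longrightarrow> smooth g \<Longrightarrow> smooth h \<Longrightarrow>
        (\<lambda>x. \<Sum>s\<le>r. C s (C (r - s) f g) h x) = (\<lambda>x. \<Sum>s\<le>r. C s f (C (r - s) g h) x)"
    using h by simp
  show "\<And>f g. smooth f \<Longrightarrow> smooth g \<Longrightarrow> (\<lambda>x. C 1 f g x - C 1 g f x) = (\<lambda>x. 2 * P f g x)"
    using h by simp
qed

locale transport =
  fixes P :: "('n::finite fn \<Rightarrow> 'n fn \<Rightarrow> 'n fn)"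
    and C :: "nat \<Rightarrow> 'n fn \<Rightarrow> 'n fn \<Rightarrow> 'n fn"
    and R :: "nat \<Rightarrow> 'n fn \<Rightarrow> 'n fn"
  assumes SP: "star_product P C" and dR: "dfam R" and R0: "R 0 = (\<lambda>f. f)"
    and Rrho: "\<And>q is. sun_cochain C q is = R q (mono is)"
begin

lemmas bC = star_product_facts(1)[OF SP]
lemmas C0 = star_product_facts(2)[OF SP]
lemmas Cc1 = star_product_facts(3)[OF SP]
lemmas Cc2 = star_product_facts(4)[OF SP]
lemmas Cassoc = star_product_facts(5)[OF SP]
lemmas Canti = star_product_facts(6)[OF SP]

abbreviation "T \<equiv> Tinv R"

lemma dT: "dfam T" by (rule dfam_Tinv[OF dR])

definition Phi :: "'n ser \<Rightarrow> 'n ser \<Rightarrow> 'n ser" where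
  "Phi F G = sop T (ser_star C (sop R F) (sop R G))"

definition C' :: "nat \<Rightarrow> 'n fn \<Rightarrow> 'n fn \<Rightarrow> 'n fn" where
  "C' r f g = Phi (const_ser f) (const_ser g) r"

lemma sopR_const: "sop R (const_ser f) = (\<lambda>q. R q f)"
  by (rule ext) (simp add: sop_const dR)

lemma C'_expl: "C' r = (\<lambda>f g x. \<Sum>s\<le>r. T s (\<lambda>x. \<Sum>a\<le>r - s. \<Sum>b\<le>r - s - a.
      C a (R b f) (R (r - s - a - b) g) x) x)"
  by (intro ext) (simp only: C'_def Phi_def sopR_const, simp add: sop_def ser_star_def)

lemma bfam_C': "bfam C'"
  unfolding bfam_def
proof
  fix r
  have "bidiff_op (\<lambda>f g x. \<Sum>s\<le>r. T s (\<lambda>x. \<Sum>a\<le>r - s. \<Sum>b\<le>r - s - a.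
      C a (R b f) (R (r - s - a - b) g) x) x)"
  proof (rule bidiff_op_sum[OF finite_atMost])
    fix s
    have i: "bidiff_op (\<lambda>f g x. \<Sum>a\<le>r - s. \<Sum>b\<le>r - s - a. C a (R b f) (R (r - s - a - b) g) x)"
    proof (rule bidiff_op_sum[OF finite_atMost], rule bidiff_op_sum[OF finite_atMost])
      fix a b
      show "bidiff_op (\<lambda>f g. C a (R b f) (R (r - s - a - b) g))"
        by (rule bidiff_diff_comp) (use bC dR in \<open>auto simp: bfam_def dfam_def\<close>)
    qed
    have "bidiff_op (\<lambda>f g. T s (\<lambda>x. \<Sum>a\<le>r - s. \<Sum>b\<le>r - s - a. C a (R b f) (R (r - s - a - b) g) x))"
      by (rule diff_bidiff_comp[OF _ i]) (use dT in \<open>simp add: dfam_def\<close>)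
    then show "bidiff_op (\<lambda>f g x. T s (\<lambda>x. \<Sum>a\<le>r - s. \<Sum>b\<le>r - s - a. C a (R b f) (R (r - s - a - b) g) x) x)"
      by simp
  qed
  then show "bidiff_op (C' r)" by (simp add: C'_expl)
qed

lemma Phi_smooth: "ssmooth F \<Longrightarrow> ssmooth G \<Longrightarrow> ssmooth (Phi F G)"
  unfolding Phi_def by (intro sop_smooth dT ss_smooth bC dR)

lemma Phi_sadd1: "ssmooth F \<Longrightarrow> ssmooth F' \<Longrightarrow> ssmooth G \<Longrightarrow> Phi (sadd F F') G = sadd (Phi F G) (Phi F' G)"
  unfolding Phi_def by (simp add: sop_sadd ss_sadd1 dR dT bC sop_smooth ss_smooth)

lemma Phi_sadd2: "ssmooth F \<Longrightarrow> ssmooth G \<Longrightarrow> ssmooth G' \<Longrightarrow> Phi F (sadd G G') = sadd (Phi F G) (Phi F G')"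
  unfolding Phi_def by (simp add: sop_sadd ss_sadd2 dR dT bC sop_smooth ss_smooth)

lemma Phi_sh1: "ssmooth G \<Longrightarrow> Phi (sh F) G = sh (Phi F G)"
  unfolding Phi_def by (simp add: sop_sh ss_sh1 dR dT bC sop_smooth)

lemma Phi_sh2: "ssmooth F \<Longrightarrow> Phi F (sh G) = sh (Phi F G)"
  unfolding Phi_def by (simp add: sop_sh ss_sh2 dR dT bC sop_smooth)

lemma L1_c:
  assumes f: "smooth f" and G: "ssmooth G"
  shows "ser_star C' (const_ser f) G = Phi (const_ser f) G"
proof (rule ser_unique[of "ser_star C' (const_ser f)" "Phi (const_ser f)"])
  fix G G' :: "'n ser" assume "ssmooth G" "ssmooth G'"
  then show "ser_star C' (const_ser f) (sadd G G') = sadd (ser_star C' (const_ser f) G) (ser_star C' (const_ser f) G')"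
    "Phi (const_ser f) (sadd G G') = sadd (Phi (const_ser f) G) (Phi (const_ser f) G')"
    by (simp_all add: ss_sadd2 Phi_sadd2 bfam_C' ssmooth_const f)
next
  fix G :: "'n ser"
  show "ser_star C' (const_ser f) (sh G) = sh (ser_star C' (const_ser f) G)"
    "Phi (const_ser f) (sh G) = sh (Phi (const_ser f) G)"
    by (simp_all add: ss_sh2 Phi_sh2 bfam_C' ssmooth_const f)
next
  fix g :: "'n fn" assume g: "smooth g"
  show "ser_star C' (const_ser f) (const_ser g) = Phi (const_ser f) (const_ser g)"
    by (rule ext) (simp add: ss_const bfam_C' f g C'_def)
qed (rule G)

lemma L1:
  assumes F: "ssmooth F" and G: "ssmooth G"
  shows "ser_star C' F G = Phi F G"
proof (rule ser_unique[of "\<lambda>F. ser_star C' F G" "\<lambda>F. Phi F G"])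
  fix F F' :: "'n ser" assume "ssmooth F" "ssmooth F'"
  then show "ser_star C' (sadd F F') G = sadd (ser_star C' F G) (ser_star C' F' G)"
    "Phi (sadd F F') G = sadd (Phi F G) (Phi F' G)"
    by (simp_all add: ss_sadd1 Phi_sadd1 bfam_C' G)
next
  fix F :: "'n ser"
  show "ser_star C' (sh F) G = sh (ser_star C' F G)" "Phi (sh F) G = sh (Phi F G)"
    by (simp_all add: ss_sh1 Phi_sh1 bfam_C' G)
qed (auto simp: L1_c G F)


lemma star_list_smooth: "ssmooth (star_list C is)"
proof (induct "is")
  case Nil
  then show ?case by (simp add: ssmooth_const smooth_const)
next
  case (Cons i "is")
  then show ?case by (simp add: ss_smooth bC ssmooth_const smooth_coord)
qed

lemma sun_cochain_nil: "sun_cochain C q [] = star_list C [] q"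
  by (simp add: sun_cochain_def)

lemma sun_cochain_single: "sun_cochain C q [i] = star_list C [i] q"
proof -
  have "{\<sigma>. \<sigma> permutes {0..<Suc 0}} = {id}" by auto
  then show ?thesis by (simp add: sun_cochain_def)
qed

lemma R_one: "q \<ge> 1 \<Longrightarrow> R q (\<lambda>x. 1) = (\<lambda>x. 0)"
  using Rrho[of q "[]"] by (simp add: sun_cochain_nil mono_def const_ser_def)

lemma R_const: assumes "q \<ge> 1" shows "R q (\<lambda>x. c) = (\<lambda>x. 0)"
proof -
  have "R q (\<lambda>x. c * 1) = (\<lambda>x. c * R q (\<lambda>x. 1) x)"
    using diff_op_cmult_arg[of "R q" "\<lambda>x. 1" c] dR smooth_const[of 1] by (simp add: dfam_def)
  then show ?thesis using R_one[OF assms] by simp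
qed

lemma R_coord: assumes "q \<ge> 1" shows "R q (coord i) = (\<lambda>x. 0)"
proof -
  have m: "mono [i] = coord i" by (simp add: mono_def coord_def)
  have "star_list C [i] q = C q (coord i) (\<lambda>x. 1)"
    by (simp add: ss_const bC smooth_coord smooth_const)
  then show ?thesis using Rrho[of q "[i]"] Cc2[OF assms smooth_coord] by (simp add: sun_cochain_single m)
qed

lemma sopR_fix: assumes "\<And>q. q \<ge> 1 \<Longrightarrow> R q f = (\<lambda>x. 0)" shows "sop R (const_ser f) = const_ser f"
  using assms by (auto simp: sopR_const const_ser_def R0 fun_eq_iff)

lemma sopT_fix:
  assumes "\<And>q. q \<ge> 1 \<Longrightarrow> R q f = (\<lambda>x. 0)" "smooth f"
  shows "sop T (const_ser f) = const_ser f"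
  using inverse_laws(2)[OF dR R0 ssmooth_const[OF assms(2)]] sopR_fix[OF assms(1)] by simp

lemma T_const: assumes "q \<ge> 1" shows "T q (\<lambda>x. c) = (\<lambda>x. 0)"
proof -
  have h: "sop T (const_ser (\<lambda>x. c)) = const_ser (\<lambda>x. c)"
    by (rule sopT_fix) (auto simp: R_const smooth_const)
  then have "T q (\<lambda>x. c) = const_ser (\<lambda>x. c) q" using sop_const[OF dT, of "\<lambda>x. c" q] by simp
  then show ?thesis using assms by (simp add: const_ser_def)
qed

lemma sopT_sopR: "ssmooth F \<Longrightarrow> sop T (sop R F) = F"
  by (rule inverse_laws(2)[OF dR R0])

lemma sopR_sopT: "ssmooth F \<Longrightarrow> sop R (sop T F) = F"
  by (rule inverse_laws(1)[OF dR R0])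

lemma Phi_assoc:
  assumes "ssmooth F" "ssmooth G" "ssmooth H"
  shows "Phi (Phi F G) H = Phi F (Phi G H)"
  unfolding Phi_def using assms
  by (simp add: sopR_sopT ss_smooth sop_smooth bC dR ss_assoc[OF bC Cassoc])

theorem equiv: "star_equiv C C'"
  unfolding star_equiv_def
proof (intro exI[of _ T] conjI allI impI)
  fix f :: "'n fn" show "T 0 f = f" by simp
next
  fix r :: nat and c :: real assume "1 \<le> r"
  show "diff_op (T r)" using dT by (simp add: dfam_def)
  show "T r (\<lambda>x. c) = (\<lambda>x. 0)" by (rule T_const) fact
next
  fix f g :: "'n fn" and r assume f: "smooth f" and g: "smooth g"
  have "(\<lambda>x. \<Sum>a\<le>r. \<Sum>b\<le>r - a. C' a (T b f) (T (r - a - b) g) x) =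
        ser_star C' (sop T (const_ser f)) (sop T (const_ser g)) r"
    by (simp add: ser_star_def sop_const dT)
  also have "\<dots> = Phi (sop T (const_ser f)) (sop T (const_ser g)) r"
    by (simp add: L1 sop_smooth dT ssmooth_const f g)
  also have "\<dots> = sop T (ser_star C (const_ser f) (const_ser g)) r"
    by (simp add: Phi_def sopR_sopT ssmooth_const f g)
  also have "\<dots> = (\<lambda>x. \<Sum>s\<le>r. T s (C (r - s) f g) x)"
    by (simp add: sop_def ss_const bC f g)
  finally show "(\<lambda>x. \<Sum>s\<le>r. T s (C (r - s) f g) x) = (\<lambda>x. \<Sum>a\<le>r. \<Sum>b\<le>r - a. C' a (T b f) (T (r - a - b) g) x)"
    by simp
qed

lemma ss_cconst:
  assumes "ssmooth G" shows "ser_star C (const_ser (\<lambda>x. c)) G = sscale c G"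
proof (rule ext)
  fix r
  have "ser_star C (const_ser (\<lambda>x. c)) G r = (\<lambda>x. \<Sum>s\<le>r. C s (\<lambda>x. c) (G (r - s)) x)"
    by (rule ss_const1[OF bC smooth_const assms])
  also have "\<dots> = (\<lambda>x. \<Sum>s\<le>r. if s = 0 then c * G r x else 0)"
    using assms by (intro ext sum.cong refl) (auto simp: C0 Cc1 smooth_const ssmooth_def)
  also have "\<dots> = sscale c G r" by (simp add: sscale_def sum.delta)
  finally show "ser_star C (const_ser (\<lambda>x. c)) G r = sscale c G r" .
qed

lemma ss_cconst2:
  assumes "ssmooth G" shows "ser_star C G (const_ser (\<lambda>x. c)) = sscale c G"
proof (rule ext)
  fix r
  have "ser_star C G (const_ser (\<lambda>x. c)) r = (\<lambda>x. \<Sum>s\<le>r. C s (G (r - s)) (\<lambda>x. c) x)"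
    by (rule ss_const2[OF bC assms smooth_const])
  also have "\<dots> = (\<lambda>x. \<Sum>s\<le>r. if s = 0 then c * G r x else 0)"
    using assms by (intro ext sum.cong refl) (auto simp: C0 Cc2 smooth_const ssmooth_def mult.commute)
  also have "\<dots> = sscale c G r" by (simp add: sscale_def sum.delta)
  finally show "ser_star C G (const_ser (\<lambda>x. c)) r = sscale c G r" .
qed

theorem star_C': "star_product P C'"
  unfolding star_product_def
proof (intro conjI allI impI)
  fix r show "bidiff_op (C' r)" using bfam_C' by (simp add: bfam_def)
next
  fix f g :: "'n fn" assume f: "smooth f" and g: "smooth g"
  show "C' 0 f g = (\<lambda>x. f x * g x)"
    by (simp add: C'_def Phi_def sop_def ser_star_def sopR_const R0 C0 f g const_ser_def)
next
  fix r :: nat and c :: real and f :: "'n fn" assume r: "1 \<le> r" and f: "smooth f"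
  have "C' r (\<lambda>x. c) f = sop T (sscale c (sop R (const_ser f))) r"
    by (simp add: C'_def Phi_def sopR_fix R_const ss_cconst sop_smooth dR ssmooth_const f)
  also have "\<dots> = sscale c (const_ser f) r"
    by (simp add: sop_sscale dT sop_smooth dR ssmooth_const f sopT_sopR)
  finally show "C' r (\<lambda>x. c) f = (\<lambda>x. 0)" using r by (simp add: sscale_def const_ser_def)
  have "C' r f (\<lambda>x. c) = sop T (sscale c (sop R (const_ser f))) r"
    by (simp add: C'_def Phi_def sopR_fix R_const ss_cconst2 sop_smooth dR ssmooth_const f)
  also have "\<dots> = sscale c (const_ser f) r"
    by (simp add: sop_sscale dT sop_smooth dR ssmooth_const f sopT_sopR)
  finally show "C' r f (\<lambda>x. c) = (\<lambda>x. 0)" using r by (simp add: sscale_def const_ser_def)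
next
  fix r and f g h :: "'n fn" assume f: "smooth f" and g: "smooth g" and h: "smooth h"
  have "(\<lambda>x. \<Sum>s\<le>r. C' s (C' (r - s) f g) h x) = ser_star C' (ser_star C' (const_ser f) (const_ser g)) (const_ser h) r"
    by (subst ss_const2[OF bfam_C' ss_smooth[OF bfam_C' ssmooth_const[OF f] ssmooth_const[OF g]] h])
       (simp add: ss_const bfam_C' f g)
  also have "\<dots> = Phi (Phi (const_ser f) (const_ser g)) (const_ser h) r"
    by (simp add: L1 ss_smooth bfam_C' Phi_smooth ssmooth_const f g h)
  also have "\<dots> = Phi (const_ser f) (Phi (const_ser g) (const_ser h)) r"
    by (simp add: Phi_assoc ssmooth_const f g h)
  also have "\<dots> = ser_star C' (const_ser f) (ser_star C' (const_ser g) (const_ser h)) r"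
    by (simp add: L1 ss_smooth bfam_C' Phi_smooth ssmooth_const f g h)
  also have "\<dots> = (\<lambda>x. \<Sum>s\<le>r. C' s f (C' (r - s) g h) x)"
    by (subst ss_const1[OF bfam_C' f ss_smooth[OF bfam_C' ssmooth_const[OF g] ssmooth_const[OF h]]])
       (simp add: ss_const bfam_C' g h)
  finally show "(\<lambda>x. \<Sum>s\<le>r. C' s (C' (r - s) f g) h x) = (\<lambda>x. \<Sum>s\<le>r. C' s f (C' (r - s) g h) x)" .
next
  fix f g :: "'n fn" assume f: "smooth f" and g: "smooth g"
  have e: "C' 1 f g = (\<lambda>x. (f x * R 1 g x + R 1 f x * g x + C 1 f g x) + T 1 (\<lambda>x. f x * g x) x)"
    if f: "smooth f" and g: "smooth g" for f g
  proof -
    have "C' 1 f g = (\<lambda>x. \<Sum>s\<le>1. T s (\<lambda>x. \<Sum>a\<le>1 - s. \<Sum>b\<le>1 - s - a.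
      C a (R b f) (R (1 - s - a - b) g) x) x)" by (simp add: C'_expl)
    also have "\<dots> = (\<lambda>x. (C 0 f (R 1 g) x + C 0 (R 1 f) g x + C 1 f g x) + T 1 (\<lambda>x. C 0 f g x) x)"
      by (simp add: R0 atMost_Suc ac_simps)
    also have "\<dots> = (\<lambda>x. (f x * R 1 g x + R 1 f x * g x + C 1 f g x) + T 1 (\<lambda>x. f x * g x) x)"
      using dR f g by (simp add: C0 diff_op_smooth dfam_def)
    finally show ?thesis .
  qed
  have fg: "(\<lambda>x. g x * f x) = (\<lambda>x. f x * g x)" by (simp add: mult.commute)
  have "(\<lambda>x. C' 1 f g x - C' 1 g f x) = (\<lambda>x. C 1 f g x - C 1 g f x)"
    unfolding e[OF f g] e[OF g f] fg by (simp add: algebra_simps)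
  then show "(\<lambda>x. C' 1 f g x - C' 1 g f x) = (\<lambda>x. 2 * P f g x)" using Canti[OF f g] by simp
qed


lemma star_list_C': "star_list C' is = sop T (star_list C is)"
proof (induct "is")
  case Nil
  have "sop T (const_ser (\<lambda>x. 1)) = const_ser (\<lambda>x. 1)"
    by (rule sopT_fix) (auto simp: R_const smooth_const)
  then show ?case by simp
next
  case (Cons i "is")
  have ci: "sop R (const_ser (coord i)) = const_ser (coord i)" by (rule sopR_fix) (simp add: R_coord)
  have "star_list C' (i # is) = ser_star C' (const_ser (coord i)) (sop T (star_list C is))"
    by (simp add: Cons)
  also have "\<dots> = Phi (const_ser (coord i)) (sop T (star_list C is))"
    by (simp add: L1 ssmooth_const smooth_coord sop_smooth dT star_list_smooth)
  also have "\<dots> = sop T (star_list C (i # is))"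
    by (simp add: Phi_def ci sopR_sopT star_list_smooth)
  finally show ?case .
qed

lemma smooth_mono: "smooth (mono is)"
proof -
  have "mono is = (\<lambda>x. \<Prod>j<length is. coord (is ! j) x)" by (simp add: mono_def coord_def)
  then show ?thesis by (simp add: smooth_prod smooth_coord)
qed

lemma sun_C':
  assumes r: "r \<ge> 1"
  shows "sun_cochain C' r is = (\<lambda>x. 0)"
proof -
  let ?S = "{\<sigma>. \<sigma> permutes {0..<length is}}"
  let ?L = "\<lambda>\<sigma>. map (\<lambda>j. is ! \<sigma> j) [0..<length is]"
  let ?c = "1 / fact (length is) :: real"
  have fS: "finite ?S" by (rule finite_permutations) simp
  have lin: "T s (\<lambda>x. ?c * (\<Sum>\<sigma>\<in>?S. star_list C (?L \<sigma>) q x)) =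
      (\<lambda>x. ?c * (\<Sum>\<sigma>\<in>?S. T s (star_list C (?L \<sigma>) q) x))" for s q
  proof -
    have sm: "smooth (star_list C (?L \<sigma>) q)" for \<sigma> using star_list_smooth by (simp add: ssmooth_def)
    have dTs: "diff_op (T s)" using dT by (simp add: dfam_def)
    have "T s (\<lambda>x. ?c * (\<Sum>\<sigma>\<in>?S. star_list C (?L \<sigma>) q x)) = (\<lambda>x. ?c * T s (\<lambda>x. \<Sum>\<sigma>\<in>?S. star_list C (?L \<sigma>) q x) x)"
      by (rule diff_op_cmult_arg[OF dTs smooth_sum[OF fS sm]])
    also have "\<dots> = (\<lambda>x. ?c * (\<Sum>\<sigma>\<in>?S. T s (star_list C (?L \<sigma>) q) x))"
      by (simp add: diff_op_sum_arg[OF dTs fS sm])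
    finally show ?thesis .
  qed
  have "sun_cochain C' r is = (\<lambda>x. ?c * (\<Sum>\<sigma>\<in>?S. \<Sum>s\<le>r. T s (star_list C (?L \<sigma>) (r - s)) x))"
    by (simp add: sun_cochain_def star_list_C' sop_def)
  also have "\<dots> = (\<lambda>x. \<Sum>s\<le>r. ?c * (\<Sum>\<sigma>\<in>?S. T s (star_list C (?L \<sigma>) (r - s)) x))"
    by (simp add: sum.swap[of _ ?S] sum_distrib_left)
  also have "\<dots> = (\<lambda>x. \<Sum>s\<le>r. T s (sun_cochain C (r - s) is) x)"
    by (simp only: sun_cochain_def lin)
  also have "\<dots> = sop T (sop R (const_ser (mono is))) r"
    by (simp add: Rrho sop_def[of T] sopR_const)
  also have "\<dots> = (\<lambda>x. 0)"
    using r by (simp add: sopT_sopR ssmooth_const smooth_mono const_ser_def)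
  finally show ?thesis .
qed

theorem main: "\<exists>C'. star_product P C' \<and> star_equiv C C' \<and>
           (\<forall>r is. r \<ge> 1 \<longrightarrow> sun_cochain C' r is = (\<lambda>x. 0))"
  using star_C' equiv sun_C' by blast

end



fun Wl :: "(nat \<Rightarrow> 'n::finite fn \<Rightarrow> 'n fn \<Rightarrow> 'n fn) \<Rightarrow> 'n fn list \<Rightarrow> 'n ser" where
  "Wl C [] = const_ser (\<lambda>x. 1)"
| "Wl C (f # fs) = ser_star C (const_ser f) (Wl C fs)"

definition SymL :: "(nat \<Rightarrow> 'n::finite fn \<Rightarrow> 'n fn \<Rightarrow> 'n fn) \<Rightarrow> ('a \<Rightarrow> 'n fn) \<Rightarrow> 'a set \<Rightarrow> 'n ser" where
  "SymL C u J = (\<lambda>r x. (1 / fact (card J)) * (\<Sum>ps\<in>permutations_of_set J. Wl C (map u ps) r x))"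

definition lmul :: "(nat \<Rightarrow> 'n::finite fn \<Rightarrow> 'n fn \<Rightarrow> 'n fn) \<Rightarrow> 'n fn \<Rightarrow> 'n ser \<Rightarrow> 'n ser" where
  "lmul C f G = (\<lambda>r x. \<Sum>s\<le>r. C s f (G (r - s)) x)"

locale SPC =
  fixes P :: "('n::finite fn \<Rightarrow> 'n fn \<Rightarrow> 'n fn)"
    and C :: "nat \<Rightarrow> 'n fn \<Rightarrow> 'n fn \<Rightarrow> 'n fn"
  assumes SP: "star_product P C"
begin

lemmas bC = star_product_facts(1)[OF SP]
lemmas C0 = star_product_facts(2)[OF SP]
lemmas Cc1 = star_product_facts(3)[OF SP]
lemmas Cc2 = star_product_facts(4)[OF SP]

lemma bCs: "bidiff_op (C s)" using bC by (simp add: bfam_def)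

lemma Wl_smooth: "(\<And>f. f \<in> set fs \<Longrightarrow> smooth f) \<Longrightarrow> ssmooth (Wl C fs)"
  by (induct fs) (auto simp: ssmooth_const smooth_const ss_smooth bC)

lemma Wl_cons: "smooth f \<Longrightarrow> (\<And>f. f \<in> set fs \<Longrightarrow> smooth f) \<Longrightarrow> Wl C (f # fs) = lmul C f (Wl C fs)"
  by (rule ext) (simp add: ss_const1 bC Wl_smooth lmul_def)

lemma ss_lmul: "smooth f \<Longrightarrow> ssmooth G \<Longrightarrow> ser_star C (const_ser f) G = lmul C f G"
  by (rule ext) (simp add: ss_const1 bC lmul_def)

lemma lmul_smooth: "smooth f \<Longrightarrow> ssmooth G \<Longrightarrow> ssmooth (lmul C f G)"
  unfolding lmul_def ssmooth_def
  by (intro allI smooth_sum finite_atMost) (simp add: bidiff_op_smooth bCs)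

lemma lmul_lin:
  assumes f: "smooth f" and A: "finite A" and S: "\<And>a. a \<in> A \<Longrightarrow> ssmooth (S a)"
  shows "lmul C f (\<lambda>r x. \<Sum>a\<in>A. c a * S a r x) = (\<lambda>r x. \<Sum>a\<in>A. c a * lmul C f (S a) r x)"
proof (intro ext)
  fix r x
  have sm: "\<And>a q. a \<in> A \<Longrightarrow> smooth (S a q)" using S by (simp add: ssmooth_def)
  have e: "C s f (\<lambda>x. \<Sum>a\<in>A. c a * S a q x) = (\<lambda>x. \<Sum>a\<in>A. c a * C s f (S a q) x)" for s q
  proof -
    have "C s f (\<lambda>x. \<Sum>a\<in>A. c a * S a q x) = (\<lambda>x. \<Sum>a\<in>A. C s f (\<lambda>x. c a * S a q x) x)"
      by (rule bidiff_op_sum2[OF bCs A _ f]) (intro smooth_cmult sm)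
    also have "\<dots> = (\<lambda>x. \<Sum>a\<in>A. c a * C s f (S a q) x)"
    proof -
      have "C s f (\<lambda>x. c a * S a q x) = (\<lambda>x. c a * C s f (S a q) x)" if "a \<in> A" for a
        using bidiff_op_lin2[OF bCs f sm[OF that] sm[OF that], where a="c a" and b=0] by simp
      then show ?thesis by (intro ext sum.cong) auto
    qed
    finally show ?thesis .
  qed
  show "lmul C f (\<lambda>r x. \<Sum>a\<in>A. c a * S a r x) r x = (\<Sum>a\<in>A. c a * lmul C f (S a) r x)"
    by (simp add: lmul_def e sum_distrib_left sum.swap[of _ A])
qed

lemma lmul_affine:
  assumes v: "smooth v" and G: "ssmooth G"
  shows "lmul C (\<lambda>x. v x + c) G = (\<lambda>r x. lmul C v G r x + c * G r x)"
proof (intro ext)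
  fix r x
  have sm: "\<And>q. smooth (G q)" using G by (simp add: ssmooth_def)
  have e: "C s (\<lambda>x. v x + c) (G q) x = C s v (G q) x + (if s = 0 then c * G q x else 0)" for s q
  proof (cases "s = 0")
    case True
    then show ?thesis by (simp add: C0 v sm smooth_add smooth_const algebra_simps)
  next
    case False
    have "C s (\<lambda>x. 1 * v x + 1 * c) (G q) = (\<lambda>x. 1 * C s v (G q) x + 1 * C s (\<lambda>x. c) (G q) x)"
      by (rule bidiff_op_lin1[OF bCs v smooth_const sm])
    then show ?thesis using False by (simp add: Cc1 sm)
  qed
  show "lmul C (\<lambda>x. v x + c) G r x = lmul C v G r x + c * G r x"
    by (simp add: lmul_def e sum.distrib sum.delta)
qed

lemma SymL_empty: "SymL C u {} = const_ser (\<lambda>x. 1)"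
  by (simp add: SymL_def)

lemma SymL_smooth:
  assumes "finite J" "\<And>j. j \<in> J \<Longrightarrow> smooth (u j)"
  shows "ssmooth (SymL C u J)"
proof -
  have "ssmooth (Wl C (map u ps))" if "ps \<in> permutations_of_set J" for ps
    using that assms by (intro Wl_smooth) (auto dest: permutations_of_setD)
  then show ?thesis unfolding SymL_def ssmooth_def
    by (intro allI smooth_cmult smooth_sum finite_permutations_of_set) (simp add: ssmooth_def)
qed

lemma SymL_rec:
  assumes J: "finite J" "J \<noteq> {}" and u: "\<And>j. j \<in> J \<Longrightarrow> smooth (u j)"
  shows "SymL C u J = (\<lambda>r x. (1 / card J) * (\<Sum>j\<in>J. lmul C (u j) (SymL C u (J - {j})) r x))"
proof (intro ext)
  fix r x
  let ?n = "card J"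
  have n: "?n = Suc (?n - 1)" using J by (simp add: card_gt_0_iff)
  have cJ: "card (J - {j}) = ?n - 1" if "j \<in> J" for j using that J by simp
  have Wsm: "ssmooth (Wl C (map u ps))" if "ps \<in> permutations_of_set (J - {j})" "j \<in> J" for ps j
    using that u by (intro Wl_smooth) (auto dest: permutations_of_setD)
  have "(\<Sum>ps\<in>permutations_of_set J. Wl C (map u ps) r x) =
      (\<Sum>j\<in>J. \<Sum>ps\<in>permutations_of_set (J - {j}). Wl C (map u (j # ps)) r x)"
  proof -
    have "(\<Sum>ps\<in>permutations_of_set J. Wl C (map u ps) r x) =
        (\<Sum>ps\<in>(\<Union>j\<in>J. (\<lambda>xs. j # xs) ` permutations_of_set (J - {j})). Wl C (map u ps) r x)"
      by (simp add: permutations_of_set_nonempty[OF J(2)])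
    also have "\<dots> = (\<Sum>j\<in>J. \<Sum>ps\<in>(\<lambda>xs. j # xs) ` permutations_of_set (J - {j}). Wl C (map u ps) r x)"
      by (rule sum.UNION_disjoint) (auto simp: J)
    also have "\<dots> = (\<Sum>j\<in>J. \<Sum>ps\<in>permutations_of_set (J - {j}). Wl C (map u (j # ps)) r x)"
      by (simp add: sum.reindex)
    finally show ?thesis .
  qed
  also have "\<dots> = (\<Sum>j\<in>J. lmul C (u j) (\<lambda>r x. \<Sum>ps\<in>permutations_of_set (J - {j}). 1 * Wl C (map u ps) r x) r x)"
  proof (intro sum.cong refl)
    fix j assume j: "j \<in> J"
    have "(\<Sum>ps\<in>permutations_of_set (J - {j}). Wl C (map u (j # ps)) r x) =
        (\<Sum>ps\<in>permutations_of_set (J - {j}). 1 * lmul C (u j) (Wl C (map u ps)) r x)"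
    proof (intro sum.cong refl)
      fix ps assume "ps \<in> permutations_of_set (J - {j})"
      then have "ssmooth (Wl C (map u ps))" by (rule Wsm[OF _ j])
      then show "Wl C (map u (j # ps)) r x = 1 * lmul C (u j) (Wl C (map u ps)) r x"
        by (simp add: ss_lmul u j)
    qed
    also have "\<dots> = lmul C (u j) (\<lambda>r x. \<Sum>ps\<in>permutations_of_set (J - {j}). 1 * Wl C (map u ps) r x) r x"
      by (subst lmul_lin) (auto intro: u j Wsm[OF _ j])
    finally show "(\<Sum>ps\<in>permutations_of_set (J - {j}). Wl C (map u (j # ps)) r x) =
        lmul C (u j) (\<lambda>r x. \<Sum>ps\<in>permutations_of_set (J - {j}). 1 * Wl C (map u ps) r x) r x" .
  qed
  also have "\<dots> = (\<Sum>j\<in>J. fact (?n - 1) * lmul C (u j) (SymL C u (J - {j})) r x)"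
  proof (intro sum.cong refl)
    fix j assume j: "j \<in> J"
    have "SymL C u (J - {j}) = (\<lambda>r x. \<Sum>ps\<in>permutations_of_set (J - {j}). (1 / fact (?n - 1)) * Wl C (map u ps) r x)"
      by (simp add: SymL_def cJ[OF j] sum_distrib_left)
    then have "lmul C (u j) (SymL C u (J - {j})) r x =
        (\<Sum>ps\<in>permutations_of_set (J - {j}). (1 / fact (?n - 1)) * lmul C (u j) (Wl C (map u ps)) r x)"
      by (simp only:) (subst lmul_lin, auto intro: u j Wsm[OF _ j])
    moreover have "lmul C (u j) (\<lambda>r x. \<Sum>ps\<in>permutations_of_set (J - {j}). 1 * Wl C (map u ps) r x) r x =
        (\<Sum>ps\<in>permutations_of_set (J - {j}). 1 * lmul C (u j) (Wl C (map u ps)) r x)"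
      by (simp only: lmul_lin u j Wsm[OF _ j] finite_permutations_of_set)
    ultimately show "lmul C (u j) (\<lambda>r x. \<Sum>ps\<in>permutations_of_set (J - {j}). 1 * Wl C (map u ps) r x) r x =
        fact (?n - 1) * lmul C (u j) (SymL C u (J - {j})) r x"
      by (simp add: sum_distrib_left)
  qed
  finally have "(\<Sum>ps\<in>permutations_of_set J. Wl C (map u ps) r x) =
      fact (?n - 1) * (\<Sum>j\<in>J. lmul C (u j) (SymL C u (J - {j})) r x)"
    by (simp add: sum_distrib_left)
  moreover have "fact ?n = real ?n * fact (?n - 1)" using J by (simp add: fact_reduce card_gt_0_iff)
  ultimately show "SymL C u J r x = 1 / real (card J) * (\<Sum>j\<in>J. lmul C (u j) (SymL C u (J - {j})) r x)"
    unfolding SymL_def by (simp add: field_simps)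
qed


lemma SymL_rec_card:
  assumes J: "finite J" and u: "\<And>j. j \<in> J \<Longrightarrow> smooth (u j)"
  shows "(\<Sum>j\<in>J. lmul C (u j) (SymL C u (J - {j})) r x) = real (card J) * SymL C u J r x"
proof (cases "J = {}")
  case True
  then show ?thesis by simp
next
  case False
  then have "card J > 0" using J by (simp add: card_gt_0_iff)
  then show ?thesis using SymL_rec[OF J False u] by simp
qed

lemma SymL_affine:
  assumes J: "finite J" and v: "\<And>j. j \<in> J \<Longrightarrow> smooth (v j)"
  shows "SymL C (\<lambda>j x. v j x + c j) J = (\<lambda>r x. \<Sum>K\<in>Pow J. (\<Prod>j\<in>J - K. c j) * SymL C v K r x)"
  using J v
proof (induct J rule: finite_psubset_induct)
  case (psubset J)
  let ?u = "\<lambda>j x. v j x + c j"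
  let ?E = "\<lambda>A r x. \<Sum>K\<in>Pow A. (\<Prod>j\<in>A - K. c j) * SymL C v K r x"
  have vs: "\<And>j. j \<in> J \<Longrightarrow> smooth (v j)" by fact
  have us: "\<And>j. j \<in> J \<Longrightarrow> smooth (?u j)" using vs by (intro smooth_add smooth_const)
  have Ssm: "ssmooth (SymL C v K)" if "K \<subseteq> J" for K
    using that psubset(1) vs by (intro SymL_smooth) (auto intro: finite_subset)
  show ?case
  proof (cases "J = {}")
    case True
    then show ?thesis by (auto simp: SymL_empty fun_eq_iff)
  next
    case False
    show ?thesis
    proof (intro ext)
      fix r x
      let ?n = "card J"
      have n0: "?n > 0" using False psubset(1) by (simp add: card_gt_0_iff)
      have IH: "SymL C ?u (J - {j}) = ?E (J - {j})" if "j \<in> J" for j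
        using that by (intro psubset(2)) (auto intro: vs)
      have Esm: "ssmooth (?E (J - {j}))" if "j \<in> J" for j
        unfolding ssmooth_def
        using Ssm psubset(1) by (intro allI smooth_sum smooth_cmult) (auto simp: ssmooth_def)
      have "SymL C ?u J r x = (1 / ?n) * (\<Sum>j\<in>J. lmul C (?u j) (?E (J - {j})) r x)"
        using SymL_rec[OF psubset(1) False us] IH by simp
      also have "\<dots> = (1 / ?n) * (\<Sum>j\<in>J. lmul C (v j) (?E (J - {j})) r x + c j * ?E (J - {j}) r x)"
        by (simp add: lmul_affine vs Esm)
      also have "\<dots> = (1 / ?n) * ((\<Sum>j\<in>J. \<Sum>K\<in>Pow (J - {j}). (\<Prod>i\<in>J - {j} - K. c i) * lmul C (v j) (SymL C v K) r x)
           + (\<Sum>j\<in>J. \<Sum>K\<in>Pow (J - {j}). (\<Prod>i\<in>J - K. c i) * SymL C v K r x))"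
      proof -
        have a: "lmul C (v j) (?E (J - {j})) r x = (\<Sum>K\<in>Pow (J - {j}). (\<Prod>i\<in>J - {j} - K. c i) * lmul C (v j) (SymL C v K) r x)"
          if "j \<in> J" for j
          using that psubset(1) by (subst lmul_lin) (auto intro!: vs Ssm)
        have b: "c j * ?E (J - {j}) r x = (\<Sum>K\<in>Pow (J - {j}). (\<Prod>i\<in>J - K. c i) * SymL C v K r x)"
          if "j \<in> J" for j
        proof -
          have "c j * (\<Prod>i\<in>J - {j} - K. c i) = (\<Prod>i\<in>J - K. c i)" if "K \<in> Pow (J - {j})" for K
          proof -
            have "J - K = insert j (J - {j} - K)" using that \<open>j \<in> J\<close> by auto
            then show ?thesis using psubset(1) by simp
          qed
          then show ?thesis by (simp add: sum_distrib_left mult.assoc[symmetric])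
        qed
        show ?thesis by (simp add: a b sum.distrib)
      qed
      also have "\<dots> = (1 / ?n) * ((\<Sum>K\<in>Pow J. (\<Prod>i\<in>J - K. c i) * (real (card K) * SymL C v K r x))
           + (\<Sum>K\<in>Pow J. real (card (J - K)) * ((\<Prod>i\<in>J - K. c i) * SymL C v K r x)))"
      proof -
        have p1: "(\<Sum>j\<in>J. \<Sum>K\<in>Pow (J - {j}). (\<Prod>i\<in>J - {j} - K. c i) * lmul C (v j) (SymL C v K) r x) =
            (\<Sum>K\<in>Pow J. (\<Prod>i\<in>J - K. c i) * (real (card K) * SymL C v K r x))"
        proof -
          have rb: "(\<Sum>K\<in>Pow (J - {j}). (\<Prod>i\<in>J - {j} - K. c i) * lmul C (v j) (SymL C v K) r x) =
              (\<Sum>K\<in>{K \<in> Pow J. j \<in> K}. (\<Prod>i\<in>J - K. c i) * lmul C (v j) (SymL C v (K - {j})) r x)"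
            if "j \<in> J" for j
          proof (rule sum.reindex_bij_witness[where i="\<lambda>K. K - {j}" and j="insert j"])
            fix K assume "K \<in> Pow (J - {j})"
            then show "insert j K - {j} = K" "insert j K \<in> {K \<in> Pow J. j \<in> K}" using that by auto
            have "J - insert j K = J - {j} - K" by auto
            show "(\<Prod>i\<in>J - insert j K. c i) * lmul C (v j) (SymL C v (insert j K - {j})) r x =
                (\<Prod>i\<in>J - {j} - K. c i) * lmul C (v j) (SymL C v K) r x"
            proof -
              have "K - {j} = K" using \<open>K \<in> Pow (J - {j})\<close> by auto
              then show ?thesis using \<open>J - insert j K = J - {j} - K\<close> by simp
            qed
          next
            fix K assume "K \<in> {K \<in> Pow J. j \<in> K}"
            then show "insert j (K - {j}) = K" "K - {j} \<in> Pow (J - {j})" by auto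
          qed
          have "(\<Sum>j\<in>J. \<Sum>K\<in>Pow (J - {j}). (\<Prod>i\<in>J - {j} - K. c i) * lmul C (v j) (SymL C v K) r x) =
              (\<Sum>j\<in>J. \<Sum>K\<in>{K \<in> Pow J. j \<in> K}. (\<Prod>i\<in>J - K. c i) * lmul C (v j) (SymL C v (K - {j})) r x)"
            by (rule sum.cong[OF refl], rule rb, simp)
          also have "\<dots> = (\<Sum>K\<in>Pow J. \<Sum>j\<in>{j \<in> J. j \<in> K}. (\<Prod>i\<in>J - K. c i) * lmul C (v j) (SymL C v (K - {j})) r x)"
            by (rule sum.swap_restrict) (use psubset(1) in auto)
          also have "\<dots> = (\<Sum>K\<in>Pow J. (\<Prod>i\<in>J - K. c i) * (real (card K) * SymL C v K r x))"
          proof (intro sum.cong refl)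
            fix K assume K: "K \<in> Pow J"
            then have e: "{j \<in> J. j \<in> K} = K" by auto
            have fK: "finite K" using K psubset(1) by (auto intro: finite_subset)
            have "(\<Sum>j\<in>K. lmul C (v j) (SymL C v (K - {j})) r x) = real (card K) * SymL C v K r x"
              using K by (intro SymL_rec_card fK vs) auto
            then show "(\<Sum>j\<in>{j \<in> J. j \<in> K}. (\<Prod>i\<in>J - K. c i) * lmul C (v j) (SymL C v (K - {j})) r x) =
                (\<Prod>i\<in>J - K. c i) * (real (card K) * SymL C v K r x)"
              by (simp add: e sum_distrib_left[symmetric])
          qed
          finally show ?thesis .
        qed
        have p2: "(\<Sum>j\<in>J. \<Sum>K\<in>Pow (J - {j}). (\<Prod>i\<in>J - K. c i) * SymL C v K r x) =
            (\<Sum>K\<in>Pow J. real (card (J - K)) * ((\<Prod>i\<in>J - K. c i) * SymL C v K r x))"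
        proof -
          have "(\<Sum>j\<in>J. \<Sum>K\<in>Pow (J - {j}). (\<Prod>i\<in>J - K. c i) * SymL C v K r x) =
              (\<Sum>j\<in>J. \<Sum>K\<in>{K \<in> Pow J. j \<notin> K}. (\<Prod>i\<in>J - K. c i) * SymL C v K r x)"
            by (intro sum.cong refl) auto
          also have "\<dots> = (\<Sum>K\<in>Pow J. \<Sum>j\<in>{j \<in> J. j \<notin> K}. (\<Prod>i\<in>J - K. c i) * SymL C v K r x)"
            by (rule sum.swap_restrict) (use psubset(1) in auto)
          also have "\<dots> = (\<Sum>K\<in>Pow J. real (card (J - K)) * ((\<Prod>i\<in>J - K. c i) * SymL C v K r x))"
          proof (intro sum.cong refl)
            fix K assume K: "K \<in> Pow J"
            have "{j \<in> J. j \<notin> K} = J - K" by auto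
            then show "(\<Sum>j\<in>{j \<in> J. j \<notin> K}. (\<Prod>i\<in>J - K. c i) * SymL C v K r x) =
                real (card (J - K)) * ((\<Prod>i\<in>J - K. c i) * SymL C v K r x)" by simp
          qed
          finally show ?thesis .
        qed
        show ?thesis by (simp only: p1 p2)
      qed
      also have "\<dots> = (1 / ?n) * (\<Sum>K\<in>Pow J. real ?n * ((\<Prod>i\<in>J - K. c i) * SymL C v K r x))"
      proof -
        have "real (card K) + real (card (J - K)) = real ?n" if "K \<in> Pow J" for K
        proof -
          have "card (J - K) = ?n - card K" using that psubset(1) by (simp add: card_Diff_subset finite_subset)
          moreover have "card K \<le> ?n" using that psubset(1) by (simp add: card_mono)
          ultimately show ?thesis by simp
        qed
        then have "(\<Sum>K\<in>Pow J. (\<Prod>i\<in>J - K. c i) * (real (card K) * SymL C v K r x)) +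
            (\<Sum>K\<in>Pow J. real (card (J - K)) * ((\<Prod>i\<in>J - K. c i) * SymL C v K r x)) =
            (\<Sum>K\<in>Pow J. real ?n * ((\<Prod>i\<in>J - K. c i) * SymL C v K r x))"
        proof -
          have "(\<Prod>i\<in>J - K. c i) * (real (card K) * SymL C v K r x) +
              real (card (J - K)) * ((\<Prod>i\<in>J - K. c i) * SymL C v K r x) =
              real ?n * ((\<Prod>i\<in>J - K. c i) * SymL C v K r x)" if K: "K \<in> Pow J" for K
          proof -
            have "real ?n = real (card K) + real (card (J - K))" using \<open>\<And>K. K \<in> Pow J \<Longrightarrow> _\<close>[OF K] by simp
            then show ?thesis by (simp add: algebra_simps)
          qed
          then show ?thesis by (simp add: sum.distrib[symmetric])
        qed
        then show ?thesis by simp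
      qed
      also have "\<dots> = ?E J r x" using n0 by (simp add: sum_distrib_left[symmetric])
      finally show "SymL C ?u J r x = ?E J r x" .
    qed
  qed
qed

end



definition van :: "real^'n::finite \<Rightarrow> nat \<Rightarrow> 'n fn \<Rightarrow> bool" where
  "van x0 m f \<longleftrightarrow> (\<forall>\<beta>. length \<beta> < m \<longrightarrow> pderivs \<beta> f x0 = 0)"

lemma van_mono: "m' \<le> m \<Longrightarrow> van x0 m f \<Longrightarrow> van x0 m' f"
  by (auto simp: van_def)

lemma van_0: "van x0 0 f" by (simp add: van_def)

lemma van_sum:
  assumes "finite A" "\<And>a. a \<in> A \<Longrightarrow> smooth (h a)" "\<And>a. a \<in> A \<Longrightarrow> van x0 m (h a)"
  shows "van x0 m (\<lambda>x. \<Sum>a\<in>A. h a x)"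
  using assms by (auto simp: van_def pderivs_sum)

lemma sum_list_zero: "(\<And>p. p \<in> set xs \<Longrightarrow> f p = 0) \<Longrightarrow> (\<Sum>p\<leftarrow>xs. f p) = (0::real)"
  by (induct xs) auto

lemma van_mult_zero:
  assumes u: "smooth u" "u x0 = 0" and G: "smooth G" "van x0 m G"
  shows "van x0 (Suc m) (\<lambda>x. u x * G x)"
  unfolding van_def
proof (intro allI impI)
  fix \<beta> :: "'a list" assume l: "length \<beta> < Suc m"
  have "pderivs a u x0 * pderivs b G x0 = 0" if "(a, b) \<in> set (splits \<beta>)" for a b
  proof (cases a)
    case Nil
    then show ?thesis using u by simp
  next
    case (Cons i a')
    then have "length b < m" using splits_length[OF that] l by simp
    then show ?thesis using G by (simp add: van_def)
  qed
  then show "pderivs \<beta> (\<lambda>x. u x * G x) x0 = 0"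
    by (simp add: pderivs_mult u G case_prod_beta, intro sum_list_zero) auto
qed


lemma van_bidiff:
  assumes "bidiff_op B"
  shows "\<exists>k. \<forall>x0 f G m. smooth f \<longrightarrow> smooth G \<longrightarrow> van x0 (m + k) G \<longrightarrow> van x0 m (B f G)"
proof -
  obtain k a where a: "\<And>\<alpha> \<beta>. smooth (a \<alpha> \<beta>)"
    "\<And>f g. smooth f \<Longrightarrow> smooth g \<Longrightarrow>
       B f g = (\<lambda>x. \<Sum>\<alpha>\<in>idx_lists k. \<Sum>\<beta>\<in>idx_lists k. a \<alpha> \<beta> x * pderivs \<alpha> f x * pderivs \<beta> g x)"
    using assms by (rule bidiff_opE) blast
  have "van x0 m (B f G)" if f: "smooth f" and G: "smooth G" and v: "van x0 (m + k) G" for x0 f G m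
  proof -
    have t: "van x0 m (\<lambda>x. (a \<alpha> \<beta> x * pderivs \<alpha> f x) * pderivs \<beta> G x)" if "\<beta> \<in> idx_lists k" for \<alpha> \<beta>
      unfolding van_def
    proof (intro allI impI)
      fix \<gamma> :: "'a list" assume l: "length \<gamma> < m"
      have h: "smooth (\<lambda>x. a \<alpha> \<beta> x * pderivs \<alpha> f x)" by (intro smooth_mult a smooth_pderivs f)
      have "pderivs c (\<lambda>x. a \<alpha> \<beta> x * pderivs \<alpha> f x) x0 * pderivs d (pderivs \<beta> G) x0 = 0"
        if "(c, d) \<in> set (splits \<gamma>)" for c d
      proof -
        have "length (d @ \<beta>) < m + k" using splits_length[OF that] l \<open>\<beta> \<in> idx_lists k\<close>
          by (simp add: idx_lists_def)
        then have "pderivs (d @ \<beta>) G x0 = 0" using v by (simp add: van_def)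
        then show ?thesis by (simp add: pderivs_append)
      qed
      then show "pderivs \<gamma> (\<lambda>x. (a \<alpha> \<beta> x * pderivs \<alpha> f x) * pderivs \<beta> G x) x0 = 0"
        by (simp add: pderivs_mult h smooth_pderivs G case_prod_beta, intro sum_list_zero) auto
    qed
    have "van x0 m (\<lambda>x. \<Sum>\<alpha>\<in>idx_lists k. \<Sum>\<beta>\<in>idx_lists k. (a \<alpha> \<beta> x * pderivs \<alpha> f x) * pderivs \<beta> G x)"
      by (intro van_sum finite_idx_lists smooth_sum smooth_mult a smooth_pderivs f G t)
    then show ?thesis by (simp add: a f G)
  qed
  then show ?thesis by blast
qed

context SPC
begin

lemma order_bound: "\<exists>K. \<forall>s\<le>r. \<forall>x0 f G m. smooth f \<longrightarrow> smooth G \<longrightarrow> van x0 (m + K) G \<longrightarrow> van x0 m (C s f G)"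
proof -
  have "\<forall>s. \<exists>k. \<forall>x0 f G m. smooth f \<longrightarrow> smooth G \<longrightarrow> van x0 (m + k) G \<longrightarrow> van x0 m (C s f G)"
    using van_bidiff[OF bCs] by blast
  then obtain kf where kf: "\<And>s x0 f G m. smooth f \<Longrightarrow> smooth G \<Longrightarrow> van x0 (m + kf s) G \<Longrightarrow> van x0 m (C s f G)"
    by metis
  have "van x0 m (C s f G)" if "s \<le> r" "smooth f" "smooth G" "van x0 (m + (\<Sum>s\<le>r. kf s)) G" for s x0 f G m
  proof -
    have "kf s \<le> (\<Sum>s\<le>r. kf s)" using that(1) by (intro member_le_sum) auto
    then have "van x0 (m + kf s) G" using that(4) van_mono[of "m + kf s" "m + (\<Sum>s\<le>r. kf s)" x0 G] by simp
    then show ?thesis using kf that by blast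
  qed
  then show ?thesis by blast
qed

lemma Wl_van:
  assumes K: "\<forall>s\<le>r. \<forall>x0 f G m. smooth f \<longrightarrow> smooth G \<longrightarrow> van x0 (m + K) G \<longrightarrow> van x0 m (C s f G)"
  shows "q \<le> r \<Longrightarrow> m + (K + 1) * q \<le> length us \<Longrightarrow> (\<And>u. u \<in> set us \<Longrightarrow> smooth u \<and> u x0 = 0)
    \<Longrightarrow> van x0 m (Wl C us q)"
proof (induct us arbitrary: q m)
  case Nil
  then show ?case by (simp add: van_def)
next
  case (Cons u us)
  have u: "smooth u" "u x0 = 0" using Cons.prems(3) by auto
  have us: "\<And>u. u \<in> set us \<Longrightarrow> smooth u" using Cons.prems(3) by auto
  have Ws: "ssmooth (Wl C us)" by (rule Wl_smooth) (use us in auto)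
  have Wsq: "smooth (Wl C us q')" for q' using Ws by (simp add: ssmooth_def)
  have e: "Wl C (u # us) q = (\<lambda>x. \<Sum>s\<le>q. C s u (Wl C us (q - s)) x)"
    by (simp add: ss_lmul u Ws lmul_def)
  have "van x0 m (C s u (Wl C us (q - s)))" if s: "s \<le> q" for s
  proof (cases "s = 0")
    case True
    show ?thesis
    proof (cases m)
      case 0
      then show ?thesis by (simp add: van_0)
    next
      case (Suc m')
      have "van x0 m' (Wl C us q)"
        using Cons.prems Suc by (intro Cons.hyps) auto
      then have "van x0 m (\<lambda>x. u x * Wl C us q x)" using Suc van_mult_zero[OF u Wsq] by simp
      then show ?thesis using True by (simp add: C0 u Wsq)
    qed
  next
    case False
    have a: "(K + 1) * (q - s) + (K + 1) \<le> (K + 1) * q"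
    proof -
      have "(K + 1) * (q - s) + (K + 1) = (K + 1) * (q - s + 1)" by simp
      also have "\<dots> \<le> (K + 1) * q" using False s by (intro mult_le_mono2) simp
      finally show ?thesis .
    qed
    have "van x0 (m + K) (Wl C us (q - s))"
      using Cons.prems a by (intro Cons.hyps) auto
    then show ?thesis using K Cons.prems(1) s u Wsq by auto
  qed
  then show ?case unfolding e
    by (intro van_sum finite_atMost) (auto intro: bidiff_op_smooth bCs u Wsq)
qed

lemma Wl_vanish: "\<exists>N. \<forall>us x0. (\<forall>u\<in>set us. smooth u \<and> u x0 = 0) \<longrightarrow> length us > N \<longrightarrow> Wl C us r x0 = 0"
proof -
  obtain K where K: "\<forall>s\<le>r. \<forall>x0 f G m. smooth f \<longrightarrow> smooth G \<longrightarrow> van x0 (m + K) G \<longrightarrow> van x0 m (C s f G)"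
    using order_bound by blast
  have "Wl C us r x0 = 0" if "\<forall>u\<in>set us. smooth u \<and> u x0 = 0" "length us > (K + 1) * r" for us x0
  proof -
    have "van x0 1 (Wl C us r)" using that by (intro Wl_van[OF K]) auto
    then show ?thesis using van_def[of x0 1 "Wl C us r"] by (metis length_0_conv less_one pderivs.simps(1))
  qed
  then show ?thesis by blast
qed

end



lemma sum_permutes_perms:
  "(\<Sum>\<sigma>\<in>{\<sigma>. \<sigma> permutes {0..<k}}. F (map \<sigma> [0..<k])) = (\<Sum>ps\<in>permutations_of_set {0..<k}. F ps)"
proof (rule sum.reindex_bij_witness[where i="\<lambda>ps n. if n < k then ps ! n else n" and j="\<lambda>\<sigma>. map \<sigma> [0..<k]"])
  fix \<sigma> assume s: "\<sigma> \<in> {\<sigma>. \<sigma> permutes {0..<k}}"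
  then have p: "\<sigma> permutes {0..<k}" by simp
  show "(\<lambda>n. if n < k then map \<sigma> [0..<k] ! n else n) = \<sigma>"
  proof
    fix n show "(if n < k then map \<sigma> [0..<k] ! n else n) = \<sigma> n"
      using permutes_not_in[OF p, of n] by auto
  qed
  have "set (map \<sigma> [0..<k]) = {0..<k}" using permutes_image[OF p] by simp
  moreover have "distinct (map \<sigma> [0..<k])"
    using permutes_inj_on[OF p] by (simp add: distinct_map)
  ultimately show "map \<sigma> [0..<k] \<in> permutations_of_set {0..<k}" by (rule permutations_of_setI)
  show "F (map \<sigma> [0..<k]) = F (map \<sigma> [0..<k])" ..
next
  fix ps assume ps: "ps \<in> permutations_of_set {0..<k}"
  have l: "length ps = k" using length_finite_permutations_of_set[OF ps] by simp
  show "map (\<lambda>n. if n < k then ps ! n else n) [0..<k] = ps"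
    using l by (intro nth_equalityI) auto
  have d: "distinct ps" and st: "set ps = {0..<k}" using permutations_of_setD[OF ps] by auto
  have "bij_betw ((!) ps) {..<length ps} (set ps)" by (rule bij_betw_nth[OF d refl refl])
  then have b: "bij_betw ((!) ps) {0..<k} {0..<k}" using l st by (simp add: lessThan_atLeast0)
  have "bij_betw (\<lambda>n. if n < k then ps ! n else n) {0..<k} {0..<k}"
    by (rule bij_betw_cong[THEN iffD1, OF _ b]) auto
  then show "(\<lambda>n. if n < k then ps ! n else n) \<in> {\<sigma>. \<sigma> permutes {0..<k}}"
    by (auto intro!: bij_imp_permutes)
qed

definition monoS :: "('a \<Rightarrow> 'n::finite) \<Rightarrow> 'a set \<Rightarrow> 'n fn" where
  "monoS l A = (\<lambda>x. \<Prod>j\<in>A. x $ l j)"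

lemma mono_monoS: "mono is = monoS (\<lambda>j. is ! j) {0..<length is}"
  by (simp add: mono_def monoS_def lessThan_atLeast0)

lemma smooth_monoS: "finite A \<Longrightarrow> smooth (monoS l A)"
proof -
  assume "finite A"
  moreover have "monoS l A = (\<lambda>x. \<Prod>j\<in>A. coord (l j) x)" by (simp add: monoS_def coord_def)
  ultimately show ?thesis by (simp add: smooth_prod smooth_coord)
qed

lemma partial_monoS:
  assumes "finite A"
  shows "partial b (monoS l A) = (\<lambda>x. \<Sum>j\<in>{j\<in>A. l j = b}. monoS l (A - {j}) x)"
  using assms
proof (induct A rule: finite_induct)
  case empty
  then show ?case by (simp add: monoS_def)
next
  case (insert a A)
  have e: "monoS l (insert a A) = (\<lambda>x. coord (l a) x * monoS l A x)"
    using insert by (simp add: monoS_def coord_def)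
  show ?case
  proof
    fix x
    have "partial b (monoS l (insert a A)) x = partial b (coord (l a)) x * monoS l A x + coord (l a) x * partial b (monoS l A) x"
      unfolding e by (rule partial_mult) (auto intro: smooth_diff0 smooth_coord smooth_monoS insert)
    also have "\<dots> = (if l a = b then monoS l A x else 0) + x $ l a * (\<Sum>j\<in>{j\<in>A. l j = b}. monoS l (A - {j}) x)"
      by (simp add: partial_coord insert) (simp add: coord_def)
    also have "\<dots> = (\<Sum>j\<in>{j\<in>insert a A. l j = b}. monoS l (insert a A - {j}) x)"
    proof -
      have m: "monoS l (insert a A - {j}) x = x $ l a * monoS l (A - {j}) x" if "j \<in> A" for j
      proof -
        have "insert a A - {j} = insert a (A - {j})" using that insert by auto
        then show ?thesis using insert by (simp add: monoS_def)
      qed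
      have s: "(\<Sum>j\<in>{j\<in>A. l j = b}. monoS l (insert a A - {j}) x) = x $ l a * (\<Sum>j\<in>{j\<in>A. l j = b}. monoS l (A - {j}) x)"
        by (simp add: m sum_distrib_left)
      show ?thesis
      proof (cases "l a = b")
        case True
        then have "{j\<in>insert a A. l j = b} = insert a {j\<in>A. l j = b}" by auto
        then show ?thesis using True insert s by simp
      next
        case False
        then have "{j\<in>insert a A. l j = b} = {j\<in>A. l j = b}" by auto
        then show ?thesis using False s by simp
      qed
    qed
    finally show "partial b (monoS l (insert a A)) x = (\<Sum>j\<in>{j\<in>insert a A. l j = b}. monoS l (insert a A - {j}) x)" .
  qed
qed

definition DL :: "('a \<Rightarrow> 'n) \<Rightarrow> 'a set \<Rightarrow> 'n list \<Rightarrow> 'a list set" where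
  "DL l A \<beta> = {ps. distinct ps \<and> set ps \<subseteq> A \<and> map l ps = \<beta>}"

lemma finite_DL: "finite A \<Longrightarrow> finite (DL l A \<beta>)"
proof -
  assume "finite A"
  then have "finite {ps. set ps \<subseteq> A \<and> length ps = length \<beta>}" by (rule finite_lists_length_eq)
  moreover have "DL l A \<beta> \<subseteq> {ps. set ps \<subseteq> A \<and> length ps = length \<beta>}" by (auto simp: DL_def)
  ultimately show ?thesis by (rule finite_subset[rotated])
qed

lemma pderivs_monoS:
  assumes A: "finite A"
  shows "pderivs \<beta> (monoS l A) = (\<lambda>x. \<Sum>ps\<in>DL l A \<beta>. monoS l (A - set ps) x)"
proof (induct \<beta>)
  case Nil
  have "DL l A [] = {[]}" by (auto simp: DL_def)
  then show ?case by simp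
next
  case (Cons b \<beta>)
  show ?case
  proof
    fix x
    have "pderivs (b # \<beta>) (monoS l A) x = partial b (\<lambda>x. \<Sum>ps\<in>DL l A \<beta>. monoS l (A - set ps) x) x"
      by (simp add: Cons)
    also have "\<dots> = (\<Sum>ps\<in>DL l A \<beta>. partial b (monoS l (A - set ps)) x)"
      by (rule partial_sum) (auto intro: finite_DL A smooth_diff0 smooth_monoS)
    also have "\<dots> = (\<Sum>ps\<in>DL l A \<beta>. \<Sum>j\<in>{j\<in>A - set ps. l j = b}. monoS l (A - set ps - {j}) x)"
      by (simp add: partial_monoS A)
    also have "\<dots> = (\<Sum>p\<in>(SIGMA ps:DL l A \<beta>. {j\<in>A - set ps. l j = b}). monoS l (A - set (fst p) - {snd p}) x)"
      by (subst sum.Sigma) (auto simp: finite_DL[OF A] A split_def)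
    also have "\<dots> = (\<Sum>qs\<in>DL l A (b # \<beta>). monoS l (A - set qs) x)"
    proof (rule sum.reindex_bij_witness[where i="\<lambda>qs. (tl qs, hd qs)" and j="\<lambda>p. snd p # fst p"])
      fix p assume "p \<in> (SIGMA ps:DL l A \<beta>. {j\<in>A - set ps. l j = b})"
      then show "(tl (snd p # fst p), hd (snd p # fst p)) = p"
        "snd p # fst p \<in> DL l A (b # \<beta>)"
        by (auto simp: DL_def)
      have "A - set (snd p # fst p) = A - set (fst p) - {snd p}" by auto
      then show "monoS l (A - set (snd p # fst p)) x = monoS l (A - set (fst p) - {snd p}) x" by simp
    next
      fix qs assume q: "qs \<in> DL l A (b # \<beta>)"
      then obtain j ps where qs: "qs = j # ps" by (cases qs) (auto simp: DL_def)
      show "snd (tl qs, hd qs) # fst (tl qs, hd qs) = qs" using qs by simp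
      show "(tl qs, hd qs) \<in> (SIGMA ps:DL l A \<beta>. {j\<in>A - set ps. l j = b})"
        using q qs by (auto simp: DL_def)
    qed
    finally show "pderivs (b # \<beta>) (monoS l A) x = (\<Sum>qs\<in>DL l A (b # \<beta>). monoS l (A - set qs) x)" .
  qed
qed

context SPC
begin

lemma SymL_cong:
  assumes e: "\<And>j. j \<in> J \<Longrightarrow> u j = u' j"
  shows "SymL C u J = SymL C u' J"
proof (intro ext)
  fix r x
  have m: "Wl C (map u ps) r x = Wl C (map u' ps) r x" if "ps \<in> permutations_of_set J" for ps
  proof -
    have "map u ps = map u' ps" using permutations_of_setD[OF that] e by (intro map_cong) auto
    then show ?thesis by (rule arg_cong[where f="\<lambda>l. Wl C l r x"])
  qed
  have "(\<Sum>ps\<in>permutations_of_set J. Wl C (map u ps) r x) = (\<Sum>ps\<in>permutations_of_set J. Wl C (map u' ps) r x)"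
    by (rule sum.cong[OF refl]) (rule m)
  then show "SymL C u J r x = SymL C u' J r x" by (simp add: SymL_def)
qed

lemma SymL_reindex:
  assumes b: "bij_betw h J' J"
  shows "SymL C u J = SymL C (u \<circ> h) J'"
proof -
  have inj: "inj_on h J'" and im: "h ` J' = J" using b by (auto simp: bij_betw_def)
  have P: "permutations_of_set J = map h ` permutations_of_set J'"
    using permutations_of_set_image_inj[OF inj] im by simp
  have inj2: "inj_on (map h) (permutations_of_set J')"
    by (rule inj_on_mapI, rule inj_on_subset[OF inj]) (auto dest: permutations_of_setD)
  have c: "card J = card J'" using bij_betw_same_card[OF b] by simp
  show ?thesis unfolding SymL_def P c
    by (simp add: sum.reindex[OF inj2] map_map)
qed

lemma Wl_zero: "(\<And>u. u \<in> set us \<Longrightarrow> smooth u) \<Longrightarrow> Wl C us 0 = (\<lambda>x. \<Prod>u\<leftarrow>us. u x)"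
proof (induct us)
  case Nil
  then show ?case by (simp add: const_ser_def)
next
  case (Cons u us)
  have Ws: "ssmooth (Wl C us)" by (rule Wl_smooth) (use Cons in auto)
  have "Wl C (u # us) 0 = C 0 u (Wl C us 0)" by (simp add: ss_lmul Ws Cons lmul_def)
  also have "\<dots> = (\<lambda>x. u x * Wl C us 0 x)" using C0[of u "Wl C us 0"] Ws Cons.prems by (simp add: ssmooth_def)
  finally show ?case using Cons by simp
qed

lemma SymL_zero:
  assumes J: "finite J" and u: "\<And>j. j \<in> J \<Longrightarrow> smooth (u j)"
  shows "SymL C u J 0 = (\<lambda>x. \<Prod>j\<in>J. u j x)"
proof
  fix x
  have "Wl C (map u ps) 0 x = (\<Prod>j\<in>J. u j x)" if "ps \<in> permutations_of_set J" for ps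
  proof -
    have d: "distinct ps" and st: "set ps = J" using permutations_of_setD[OF that] by auto
    have "Wl C (map u ps) 0 x = (\<Prod>j\<leftarrow>ps. u j x)"
      using u st by (subst Wl_zero) (auto simp: o_def)
    also have "\<dots> = (\<Prod>j\<in>J. u j x)" using d st by (metis prod.distinct_set_conv_list)
    finally show ?thesis .
  qed
  then show "SymL C u J 0 x = (\<Prod>j\<in>J. u j x)"
    unfolding SymL_def using J by simp
qed

lemma star_list_Wl: "star_list C js = Wl C (map coord js)"
  by (induct js) auto

lemma sun_SymL: "sun_cochain C q is = SymL C (\<lambda>j. coord (is ! j)) {0..<length is} q"
proof (rule ext)
  fix x
  have "(\<Sum>\<sigma>\<in>{\<sigma>. \<sigma> permutes {0..<length is}}. star_list C (map (\<lambda>j. is ! \<sigma> j) [0..<length is]) q x) =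
      (\<Sum>ps\<in>permutations_of_set {0..<length is}. Wl C (map (\<lambda>j. coord (is ! j)) ps) q x)"
    using sum_permutes_perms[where k="length is" and F="\<lambda>ps. Wl C (map (\<lambda>j. coord (is ! j)) ps) q x"]
    by (simp add: star_list_Wl map_map o_def)
  then show "sun_cochain C q is x = SymL C (\<lambda>j. coord (is ! j)) {0..<length is} q x"
    by (simp add: sun_cochain_def SymL_def)
qed

lemma sun_zero: "sun_cochain C 0 is = mono is"
proof -
  have "sun_cochain C 0 is = (\<lambda>x. \<Prod>j\<in>{0..<length is}. coord (is ! j) x)"
    by (simp add: sun_SymL SymL_zero smooth_coord)
  then show ?thesis by (simp add: mono_def coord_def lessThan_atLeast0)
qed

end



context SPC
begin

definition Nr :: "nat \<Rightarrow> nat" where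
  "Nr r = (SOME N. \<forall>us x0. (\<forall>u\<in>set us. smooth u \<and> u x0 = 0) \<longrightarrow> length us > N \<longrightarrow> Wl C us r x0 = 0)"

lemma Nr: "(\<forall>u\<in>set us. smooth u \<and> u x0 = 0) \<Longrightarrow> length us > Nr r \<Longrightarrow> Wl C us r x0 = 0"
  using someI_ex[OF Wl_vanish[of r]] unfolding Nr_def by blast

definition coefA :: "nat \<Rightarrow> 'n list \<Rightarrow> 'n fn" where
  "coefA r \<beta> = (\<lambda>x. (1 / fact (length \<beta>)) * (\<Sum>K\<in>Pow {0..<length \<beta>}.
      (\<Prod>j\<in>{0..<length \<beta>} - K. - (x $ (\<beta> ! j))) * SymL C (\<lambda>j. coord (\<beta> ! j)) K r x))"

definition Rop :: "nat \<Rightarrow> 'n fn \<Rightarrow> 'n fn" where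
  "Rop r f = (if r = 0 then f else (\<lambda>x. \<Sum>\<beta>\<in>idx_lists (Nr r). coefA r \<beta> x * pderivs \<beta> f x))"

lemma SymL_smooth_r: "finite J \<Longrightarrow> (\<And>j. j \<in> J \<Longrightarrow> smooth (u j)) \<Longrightarrow> smooth (SymL C u J r)"
  using SymL_smooth[of J u] by (simp add: ssmooth_def)

lemma smooth_shift: "smooth (\<lambda>y. y $ i - c)"
  using smooth_add[OF smooth_coord[of i] smooth_const[of "-c"]] by (simp add: coord_def)

lemma smooth_neg_coord: "smooth (\<lambda>x. - (x $ i))"
  using smooth_cmult[OF smooth_coord[of i], of "-1"] by (simp add: coord_def)

lemma smooth_coefA: "smooth (coefA r \<beta>)"
  unfolding coefA_def
  by (intro smooth_cmult smooth_sum finite_Pow_iff[THEN iffD2] finite_atLeastLessThan smooth_mult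
      smooth_prod smooth_neg_coord SymL_smooth_r smooth_coord) (auto intro: finite_subset)

lemma dfam_Rop: "dfam Rop"
  unfolding dfam_def
proof
  fix r
  show "diff_op (Rop r)"
  proof (cases "r = 0")
    case True
    then show ?thesis using diff_op_id by (simp add: Rop_def[abs_def])
  next
    case False
    show ?thesis unfolding diff_op_def
      by (intro exI[of _ "Nr r"] exI[of _ "coefA r"]) (simp add: Rop_def False smooth_coefA)
  qed
qed

lemma Rop0: "Rop 0 = (\<lambda>f. f)"
  by (simp add: Rop_def[abs_def])

lemma SymL_vanish:
  assumes J: "finite J" "card J > Nr r"
  shows "SymL C (\<lambda>j y. coord (l j) y + - (x0 $ l j)) J r x0 = 0"
proof -
  have "Wl C (map (\<lambda>j y. coord (l j) y + - (x0 $ l j)) ps) r x0 = 0" if "ps \<in> permutations_of_set J" for ps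
  proof (rule Nr)
    show "\<forall>u\<in>set (map (\<lambda>j y. coord (l j) y + - (x0 $ l j)) ps). smooth u \<and> u x0 = 0"
      by (auto simp: coord_def intro!: smooth_shift)
    show "Nr r < length (map (\<lambda>j y. coord (l j) y + - (x0 $ l j)) ps)"
      using length_finite_permutations_of_set[OF that] J by simp
  qed
  then show ?thesis by (simp add: SymL_def)
qed

lemma coefA_at:
  "coefA r \<beta> x0 = (1 / fact (length \<beta>)) *
     SymL C (\<lambda>j y. coord (\<beta> ! j) y + - (x0 $ (\<beta> ! j))) {0..<length \<beta>} r x0"
proof -
  have "SymL C (\<lambda>j y. coord (\<beta> ! j) y + - (x0 $ (\<beta> ! j))) {0..<length \<beta>} =
    (\<lambda>r x. \<Sum>K\<in>Pow {0..<length \<beta>}. (\<Prod>j\<in>{0..<length \<beta>} - K. - (x0 $ (\<beta> ! j))) * SymL C (\<lambda>j. coord (\<beta> ! j)) K r x)"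
    by (rule SymL_affine[where v="\<lambda>j. coord (\<beta> ! j)" and c="\<lambda>j. - (x0 $ (\<beta> ! j))"]) (auto simp: smooth_coord)
  from fun_cong[OF fun_cong[OF this, of r], of x0] show ?thesis
    by (simp only: coefA_def)
qed


lemma Rop_monoS:
  assumes r: "r \<ge> 1" and J: "finite J"
  shows "Rop r (monoS l J) x0 = SymL C (\<lambda>j. coord (l j)) J r x0"
proof -
  let ?N = "Nr r"
  let ?w = "\<lambda>j y. coord (l j) y + - (x0 $ l j)"
  define F where "F ps = (1 / fact (length ps)) * SymL C ?w (set ps) r x0 * monoS l (J - set ps) x0" for ps
  define D where "D = {ps. distinct ps \<and> set ps \<subseteq> J \<and> length ps \<le> ?N}"
  have fD: "finite D"
  proof -
    have "D \<subseteq> {ps. set ps \<subseteq> J \<and> length ps \<le> ?N}" by (auto simp: D_def)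
    moreover have "finite {ps. set ps \<subseteq> J \<and> length ps \<le> ?N}" by (rule finite_lists_length_le[OF J])
    ultimately show ?thesis by (rule finite_subset)
  qed
  have a: "coefA r (map l ps) x0 = (1 / fact (length ps)) * SymL C ?w (set ps) r x0" if d: "distinct ps" for ps
  proof -
    have b: "bij_betw ((!) ps) {0..<length ps} (set ps)"
      by (rule bij_betw_nth[OF d]) (auto simp: lessThan_atLeast0)
    have "SymL C (\<lambda>j y. coord (map l ps ! j) y + - (x0 $ (map l ps ! j))) {0..<length (map l ps)} =
        SymL C (?w \<circ> (!) ps) {0..<length ps}"
      unfolding length_map by (rule SymL_cong) auto
    also have "\<dots> = SymL C ?w (set ps)" by (rule SymL_reindex[OF b, symmetric])
    finally show ?thesis by (simp add: coefA_at)
  qed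
  have "Rop r (monoS l J) x0 = (\<Sum>\<beta>\<in>idx_lists ?N. coefA r \<beta> x0 * (\<Sum>ps\<in>DL l J \<beta>. monoS l (J - set ps) x0))"
    using r by (simp add: Rop_def pderivs_monoS J)
  also have "\<dots> = (\<Sum>\<beta>\<in>idx_lists ?N. \<Sum>ps\<in>DL l J \<beta>. F ps)"
  proof (intro sum.cong refl)
    fix \<beta> :: "'n list"
    have "coefA r \<beta> x0 * monoS l (J - set ps) x0 = F ps" if "ps \<in> DL l J \<beta>" for ps
      using that a[of ps] by (auto simp: DL_def F_def)
    then show "coefA r \<beta> x0 * (\<Sum>ps\<in>DL l J \<beta>. monoS l (J - set ps) x0) = (\<Sum>ps\<in>DL l J \<beta>. F ps)"
      by (simp add: sum_distrib_left)
  qed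
  also have "\<dots> = (\<Sum>\<beta>\<in>idx_lists ?N. \<Sum>ps\<in>{ps \<in> D. map l ps = \<beta>}. F ps)"
    by (intro sum.cong refl) (auto simp: DL_def D_def idx_lists_def)
  also have "\<dots> = (\<Sum>ps\<in>D. F ps)"
    by (rule sum.group[OF fD finite_idx_lists]) (auto simp: D_def idx_lists_def)
  also have "\<dots> = (\<Sum>K\<in>{K\<in>Pow J. card K \<le> ?N}. \<Sum>ps\<in>{ps \<in> D. set ps = K}. F ps)"
  proof (rule sum.group[symmetric, OF fD])
    show "finite {K\<in>Pow J. card K \<le> ?N}" by (rule finite_subset[of _ "Pow J"]) (use J in auto)
    show "set ` D \<subseteq> {K\<in>Pow J. card K \<le> ?N}" by (auto simp: D_def distinct_card)
  qed
  also have "\<dots> = (\<Sum>K\<in>{K\<in>Pow J. card K \<le> ?N}. SymL C ?w K r x0 * monoS l (J - K) x0)"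
  proof (intro sum.cong refl)
    fix K assume K: "K \<in> {K\<in>Pow J. card K \<le> ?N}"
    have fK: "finite K" using K J by (auto intro: finite_subset)
    have e: "{ps \<in> D. set ps = K} = permutations_of_set K"
      using K by (auto simp: D_def permutations_of_set_def distinct_card)
    have "F ps = (1 / fact (card K)) * (SymL C ?w K r x0 * monoS l (J - K) x0)" if "ps \<in> permutations_of_set K" for ps
      using permutations_of_setD[OF that] length_finite_permutations_of_set[OF that] by (simp add: F_def)
    then show "(\<Sum>ps\<in>{ps \<in> D. set ps = K}. F ps) = SymL C ?w K r x0 * monoS l (J - K) x0"
      by (simp add: e fK)
  qed
  also have "\<dots> = (\<Sum>K\<in>Pow J. SymL C ?w K r x0 * monoS l (J - K) x0)"
  proof (rule sum.mono_neutral_left)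
    show "finite (Pow J)" using J by simp
    show "{K\<in>Pow J. card K \<le> ?N} \<subseteq> Pow J" by auto
    show "\<forall>K\<in>Pow J - {K\<in>Pow J. card K \<le> ?N}. SymL C ?w K r x0 * monoS l (J - K) x0 = 0"
    proof
      fix K assume K: "K \<in> Pow J - {K\<in>Pow J. card K \<le> ?N}"
      then have "finite K" "card K > ?N" using J by (auto intro: finite_subset)
      then have "SymL C ?w K r x0 = 0" by (rule SymL_vanish)
      then show "SymL C ?w K r x0 * monoS l (J - K) x0 = 0" by simp
    qed
  qed
  also have "\<dots> = SymL C (\<lambda>j. coord (l j)) J r x0"
  proof -
    have "SymL C (\<lambda>j. coord (l j)) J = SymL C (\<lambda>j y. ?w j y + x0 $ l j) J"
      by (rule SymL_cong) (auto simp: coord_def)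
    also have "\<dots> = (\<lambda>r x. \<Sum>K\<in>Pow J. (\<Prod>j\<in>J - K. x0 $ l j) * SymL C ?w K r x)"
      by (rule SymL_affine[OF J]) (auto simp: smooth_shift coord_def)
    finally show ?thesis by (simp add: monoS_def mult.commute)
  qed
  finally show ?thesis .
qed

lemma Rrho: "sun_cochain C q is = Rop q (mono is)"
proof (cases "q = 0")
  case True
  then show ?thesis by (simp add: sun_zero Rop0)
next
  case False
  show ?thesis
  proof
    fix x
    show "sun_cochain C q is x = Rop q (mono is) x"
      using Rop_monoS[of q "{0..<length is}" "\<lambda>j. is ! j" x] False
      by (simp add: sun_SymL mono_monoS)
  qed
qed

end

theorem corollary1:
  fixes P :: "(real^'n::finite \<Rightarrow> real) \<Rightarrow> (real^'n \<Rightarrow> real) \<Rightarrow> real^'n \<Rightarrow> real"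
    and C :: "nat \<Rightarrow> (real^'n \<Rightarrow> real) \<Rightarrow> (real^'n \<Rightarrow> real) \<Rightarrow> real^'n \<Rightarrow> real"
  assumes "poisson_bracket P"
    and "star_product P C"
  shows "\<exists>C'. star_product P C' \<and> star_equiv C C' \<and>
           (\<forall>r is. r \<ge> 1 \<longrightarrow> sun_cochain C' r is = (\<lambda>x. 0))"
proof -
  interpret S: SPC P C by unfold_locales (rule assms(2))
  interpret T: transport P C S.Rop
    by unfold_locales (auto simp: assms(2) S.dfam_Rop S.Rop0 S.Rrho)
  show ?thesis by (rule T.main)
qed


end
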